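(* Let $(X,d)$ be a compact metric space and $f:X\to X$ a continuous map. Then $$\mathcal{E}(f_{\mathcal{M}})=h_{top}(f).$$
   Context: $h_{top}(f)$ is the topological entropy of $f$. For $n\in\mathbb{N}$, $d_n(x,y)=\max_{0\le i\le n-1} d(f^ix,f^iy)$ is the $n$th Bowen metric. $\mathcal{M}(X)$ is the set of Borel probability measures on $X$ (weak* topology), and $f_{\mathcal M}:\mathcal M(X)\to\mathcal M(X)$ is $f_{\mathcal M}\mu=\mu\circ f^{-1}$. For $\mu,\nu\in\mathcal M(X)$, $\Pi(\mu,\nu)$ is the set of Borel probability measures on $X\times X$ with marginals $\mu$ and $\nu$, and $W_1^n(\mu,\nu)=\inf_{\pi\in\Pi(\mu,\nu)}\int d_n(x,y)\,d\pi(x,y)$. For nonempty $\mathcal Z\subset\mathcal M(X)$, $n\in\mathbb N$, $\varepsilon>0$, $N_{\mathcal M}(\mathcal Z,n,\varepsilon)$ is the smallest cardinality of a set $E\subset\mathcal M(X)$ such that for every $\mu\in\mathcal Z$ there is $\nu\in E$ with $W_1^n(\mu,\nu)\le\varepsilon$. The entropy order is $\mathcal E(f_{\mathcal M},\mathcal Z)=\lim_{\varepsilon\to0}\limsup_{n\to\infty}\frac{\log\log N_{\mathcal M}(\mathcal Z,n,\varepsilon)}{n}$ (convention $\log 0=0$), and $\mathcal E(f_{\mathcal M}):=\mathcal E(f_{\mathcal M},\mathcal M(X))$. *)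

theory Defs
  imports "HOL-Probability.Probability"
begin

definition lg :: "real \<Rightarrow> real" where
  "lg x = (if x \<le> 0 then 0 else ln x)"

definition bowen_dist :: "('a::metric_space \<Rightarrow> 'a) \<Rightarrow> nat \<Rightarrow> 'a \<Rightarrow> 'a \<Rightarrow> real" where
  "bowen_dist f n x y = Max ((\<lambda>i. dist ((f ^^ i) x) ((f ^^ i) y)) ` {..<n})"

definition spanning_number :: "('a::metric_space \<Rightarrow> 'a) \<Rightarrow> nat \<Rightarrow> real \<Rightarrow> nat" where
  "spanning_number f n \<epsilon> =
     Inf {card E | E. finite E \<and> (\<forall>x. \<exists>y\<in>E. bowen_dist f n x y \<le> \<epsilon>)}"

definition top_entropy :: "('a::metric_space \<Rightarrow> 'a) \<Rightarrow> ereal" where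
  "top_entropy f = Lim (at_right 0)
     (\<lambda>\<epsilon>. limsup (\<lambda>n. ereal (lg (real (spanning_number f n \<epsilon>)) / real n)))"

text \<open>Borel probability measures on X (here X is the whole type).\<close>
definition prob_measures :: "'a::topological_space measure set" where
  "prob_measures = {\<mu>. prob_space \<mu> \<and> sets \<mu> = sets borel}"

definition push_fwd :: "('a::topological_space \<Rightarrow> 'a) \<Rightarrow> 'a measure \<Rightarrow> 'a measure" where
  "push_fwd f \<mu> = distr \<mu> borel f"

definition couplings :: "'a::topological_space measure \<Rightarrow> 'a measure \<Rightarrow> ('a \<times> 'a) measure set" where
  "couplings \<mu> \<nu> = {\<pi>. prob_space \<pi> \<and> sets \<pi> = sets borel \<and>
                         distr \<pi> borel fst = \<mu> \<and> distr \<pi> borel snd = \<nu>}"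

definition wasserstein_n :: "('a::metric_space \<Rightarrow> 'a) \<Rightarrow> nat \<Rightarrow> 'a measure \<Rightarrow> 'a measure \<Rightarrow> real" where
  "wasserstein_n f n \<mu> \<nu> =
     (INF \<pi>\<in>couplings \<mu> \<nu>. integral\<^sup>L \<pi> (\<lambda>p. bowen_dist f n (fst p) (snd p)))"

definition cover_number_M :: "('a::metric_space \<Rightarrow> 'a) \<Rightarrow> 'a measure set \<Rightarrow> nat \<Rightarrow> real \<Rightarrow> nat" where
  "cover_number_M f Z n \<epsilon> =
     Inf {card E | E. finite E \<and> E \<subseteq> prob_measures \<and>
                      (\<forall>\<mu>\<in>Z. \<exists>\<nu>\<in>E. wasserstein_n f n \<mu> \<nu> \<le> \<epsilon>)}"

definition entropy_order :: "('a::metric_space \<Rightarrow> 'a) \<Rightarrow> 'a measure set \<Rightarrow> ereal" where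
  "entropy_order f Z = Lim (at_right 0)
     (\<lambda>\<epsilon>. limsup (\<lambda>n. ereal (lg (lg (real (cover_number_M f Z n \<epsilon>))) / real n)))"

end

theory Submission
  imports Defs
begin

locale dyn =
  fixes f :: "'a::metric_space \<Rightarrow> 'a"
  assumes cpt: "compact (UNIV :: 'a set)"
    and cont: "continuous_on UNIV f"
begin

abbreviation bd where "bd \<equiv> bowen_dist f"

lemma cont_iter: "continuous_on UNIV (f ^^ i)"
proof (induction i)
  case 0 then show ?case by (simp add: continuous_on_id)
next
  case (Suc i)
  have "continuous_on UNIV (f \<circ> (f ^^ i))"
    by (rule continuous_on_compose[OF Suc]) (use cont in \<open>auto intro: continuous_on_subset\<close>)
  then show ?case by simp
qed

lemma bd_ge: "i < n \<Longrightarrow> dist ((f^^i) x) ((f^^i) y) \<le> bd n x y"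
  unfolding bowen_dist_def by (rule Max_ge) auto

lemma bd_le: "0 < n \<Longrightarrow> (\<And>i. i < n \<Longrightarrow> dist ((f^^i) x) ((f^^i) y) \<le> c) \<Longrightarrow> bd n x y \<le> c"
  unfolding bowen_dist_def by (subst Max_le_iff) auto

lemma bd_ex: "0 < n \<Longrightarrow> \<exists>i<n. bd n x y = dist ((f^^i) x) ((f^^i) y)"
proof -
  assume n: "0 < n"
  have "bd n x y \<in> (\<lambda>i. dist ((f ^^ i) x) ((f ^^ i) y)) ` {..<n}"
    unfolding bowen_dist_def by (rule Max_in) (use n in auto)
  then show ?thesis by auto
qed

lemma bd_nonneg: "0 < n \<Longrightarrow> 0 \<le> bd n x y"
  using bd_ge[of 0 n x y] by (meson dual_order.trans zero_le_dist)

lemma bd_sym: "bd n x y = bd n y x"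
  unfolding bowen_dist_def by (simp add: dist_commute)

lemma bd_refl: "0 < n \<Longrightarrow> bd n x x = 0"
  using bd_ex[of n x x] by auto

lemma bd_triangle: "0 < n \<Longrightarrow> bd n x z \<le> bd n x y + bd n y z"
proof -
  assume n: "0 < n"
  obtain i where i: "i < n" "bd n x z = dist ((f^^i) x) ((f^^i) z)" using bd_ex[OF n] by blast
  have "dist ((f^^i) x) ((f^^i) z) \<le> dist ((f^^i) x) ((f^^i) y) + dist ((f^^i) y) ((f^^i) z)"
    by (rule dist_triangle)
  also have "\<dots> \<le> bd n x y + bd n y z" using bd_ge[OF i(1)] by (intro add_mono) auto
  finally show ?thesis using i by simp
qed

lemma dist_le_bd: "0 < n \<Longrightarrow> dist x y \<le> bd n x y"
  using bd_ge[of 0 n x y] by simp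

lemma diam_bound: "\<exists>D>0. \<forall>x y::'a. dist x y \<le> D"
proof -
  have "bounded (UNIV :: 'a set)" using cpt by (rule compact_imp_bounded)
  then obtain e where e: "\<forall>y::'a. dist undefined y \<le> e"
    using bounded_any_center by (metis UNIV_I)
  show ?thesis
  proof (intro exI[of _ "2*e+1"] conjI allI)
    show "0 < 2*e+1" using e[rule_format, of undefined] by simp
    fix x y :: 'a
    have "dist x y \<le> dist undefined x + dist undefined y" by (rule dist_triangle3)
    then show "dist x y \<le> 2*e+1" using e[rule_format, of x] e[rule_format, of y] by simp
  qed
qed

definition D :: real where "D = (SOME D. D > 0 \<and> (\<forall>x y::'a. dist x y \<le> D))"

lemma D_pos: "D > 0" and dist_le_D: "dist (x::'a) y \<le> D"
  using someI_ex[OF diam_bound] unfolding D_def by auto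

lemma bd_le_D: "0 < n \<Longrightarrow> bd n x y \<le> D"
  by (rule bd_le) (auto intro: dist_le_D)

lemma bd_Suc: "0 < n \<Longrightarrow> bd (Suc n) x y = max (bd n x y) (dist ((f^^n) x) ((f^^n) y))"
proof -
  assume n: "0 < n"
  have "{..<Suc n} = insert n {..<n}" by auto
  then have "bd (Suc n) x y = Max (insert (dist ((f^^n) x) ((f^^n) y)) ((\<lambda>i. dist ((f ^^ i) x) ((f ^^ i) y)) ` {..<n}))"
    unfolding bowen_dist_def by simp
  also have "\<dots> = max (dist ((f^^n) x) ((f^^n) y)) (bd n x y)"
    unfolding bowen_dist_def by (subst Max_insert) (use n in auto)
  finally show ?thesis by simp
qed

lemma bd_cont: "0 < n \<Longrightarrow> continuous_on UNIV (\<lambda>p. bd n (fst p) (snd p))"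
proof (induction n rule: nat_induct_non_zero)
  case 1
  have "bd 1 x y = dist x y" for x y
    using bd_ex[of 1 x y] by auto
  then show ?case by (simp add: continuous_on_dist continuous_on_fst continuous_on_snd)
next
  case (Suc n)
  have c: "continuous_on UNIV (\<lambda>p::'a\<times>'a. dist ((f^^n) (fst p)) ((f^^n) (snd p)))"
    by (intro continuous_on_dist continuous_on_compose2[OF cont_iter] continuous_on_fst continuous_on_snd continuous_on_id) auto
  show ?case unfolding bd_Suc[OF Suc(1)]
    by (intro continuous_on_max Suc c)
qed

lemma bd_cont1: "0 < n \<Longrightarrow> continuous_on UNIV (\<lambda>x. bd n x y)"
proof -
  assume n: "0 < n"
  have "continuous_on UNIV ((\<lambda>p. bd n (fst p) (snd p)) \<circ> (\<lambda>x. (x, y)))"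
    by (rule continuous_on_compose) (auto intro: continuous_intros bd_cont[OF n, THEN continuous_on_subset])
  then show ?thesis by (simp add: o_def)
qed

definition spanning :: "nat \<Rightarrow> real \<Rightarrow> 'a set \<Rightarrow> bool" where
  "spanning n e E \<longleftrightarrow> finite E \<and> (\<forall>x. \<exists>y\<in>E. bd n x y \<le> e)"

lemma spanning_ex: "0 < n \<Longrightarrow> 0 < e \<Longrightarrow> \<exists>E. spanning n e E"
proof -
  assume n: "0 < n" and e: "0 < e"
  let ?B = "\<lambda>y. {x. bd n x y < e}"
  have op: "open (?B y)" for y
  proof -
    have "\<forall>B. open B \<longrightarrow> open (UNIV \<inter> (\<lambda>x. bd n x y) -` B)"
      using continuous_on_open_vimage[OF open_UNIV, of "\<lambda>x. bd n x y"] bd_cont1[OF n, of y]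
      by simp
    then have "open (UNIV \<inter> (\<lambda>x. bd n x y) -` {..<e})" using open_lessThan by blast
    moreover have "UNIV \<inter> (\<lambda>x. bd n x y) -` {..<e} = ?B y" by auto
    ultimately show ?thesis by simp
  qed
  have "UNIV \<subseteq> \<Union> (?B ` UNIV)" using bd_refl[OF n] e by auto
  then obtain C where C: "C \<subseteq> UNIV" "finite C" "UNIV \<subseteq> \<Union> (?B ` C)"
    by (rule compactE_image[OF cpt op])
  have "\<exists>y\<in>C. bd n x y \<le> e" for x
  proof -
    from C(3) obtain y where "y \<in> C" "bd n x y < e" by blast
    then show ?thesis by (intro bexI[of _ y]) auto
  qed
  then show ?thesis unfolding spanning_def using C(2) by blast
qed

lemma spanning_number_eq: "spanning_number f n e = Inf {card E | E. spanning n e E}"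
  unfolding spanning_number_def spanning_def by simp

lemma spanning_number_attained:
  assumes "0 < n" "0 < e"
  shows "\<exists>E. spanning n e E \<and> card E = spanning_number f n e"
proof -
  have ne: "{card E | E. spanning n e E} \<noteq> {}" using spanning_ex[OF assms] by auto
  show ?thesis using Inf_nat_def1[OF ne] unfolding spanning_number_eq by auto
qed

lemma spanning_number_le: "spanning n e E \<Longrightarrow> spanning_number f n e \<le> card E"
  unfolding spanning_number_eq by (rule cInf_lower) auto

lemma spanning_number_pos: "0 < n \<Longrightarrow> 0 < e \<Longrightarrow> 1 \<le> spanning_number f n e"
proof -
  assume a: "0 < n" "0 < e"
  obtain E where E: "spanning n e E" "card E = spanning_number f n e"
    using spanning_number_attained[OF a] by blast
  have "E \<noteq> {}" using E(1) unfolding spanning_def by auto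
  then show ?thesis using E unfolding spanning_def by (metis card_0_eq less_one not_less)
qed

lemma spanning_mono: "spanning n e E \<Longrightarrow> e \<le> e' \<Longrightarrow> spanning n e' E"
  unfolding spanning_def by (meson order_trans)

lemma spanning_number_anti:
  "0 < n \<Longrightarrow> 0 < e \<Longrightarrow> e \<le> e' \<Longrightarrow> spanning_number f n e' \<le> spanning_number f n e"
  using spanning_number_attained spanning_number_le spanning_mono by metis

definition separated :: "nat \<Rightarrow> real \<Rightarrow> 'a set \<Rightarrow> bool" where
  "separated n r S \<longleftrightarrow> finite S \<and> (\<forall>s\<in>S. \<forall>t\<in>S. s \<noteq> t \<longrightarrow> r < bd n s t)"

lemma separated_card_le:
  assumes n: "0 < n" and S: "separated n (2*e) S" and E: "spanning n e E"
  shows "card S \<le> card E"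
proof -
  define g where "g s = (SOME y. y \<in> E \<and> bd n s y \<le> e)" for s
  have g: "g s \<in> E \<and> bd n s (g s) \<le> e" for s
    unfolding g_def by (rule someI_ex) (use E in \<open>auto simp: spanning_def\<close>)
  have "inj_on g S"
  proof
    fix s t assume st: "s \<in> S" "t \<in> S" "g s = g t"
    have "bd n s t \<le> bd n s (g s) + bd n (g s) t" by (rule bd_triangle[OF n])
    also have "\<dots> \<le> 2*e" using g[of s] g[of t] st(3) bd_sym[of n t] by simp
    finally show "s = t" using S st unfolding separated_def by force
  qed
  then show ?thesis using g E unfolding spanning_def by (meson card_inj_on_le image_subset_iff)
qed

lemma separated_big:
  assumes n: "0 < n" and r: "0 < r"
  shows "\<exists>S. separated n r S \<and> spanning_number f n r \<le> card S"
proof -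
  obtain E where E: "spanning n (r/2) E" using spanning_ex[OF n] r by fastforce
  have bnd: "\<forall>S. separated n r S \<longrightarrow> card S \<le> card E"
    using separated_card_le[OF n _ E] by simp
  have "separated n r {}" unfolding separated_def by simp
  then obtain S where S: "separated n r S" and mx: "\<forall>T. separated n r T \<longrightarrow> card T \<le> card S"
  proof -
    have "\<exists>S. separated n r S \<and> (\<forall>T. separated n r T \<longrightarrow> card T \<le> card S)"
      by (rule ex_has_greatest_nat[of "separated n r" "{}" card "Suc (card E)"]) (use \<open>separated n r {}\<close> bnd in auto)
    then show ?thesis using that by blast
  qed
  have "spanning n r S"
    unfolding spanning_def
  proof (intro conjI allI)
    show "finite S" using S separated_def by auto
    fix x show "\<exists>y\<in>S. bd n x y \<le> r"
    proof (rule ccontr)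
      assume "\<not> ?thesis"
      then have far: "\<forall>y\<in>S. r < bd n x y" by auto
      have xS: "x \<notin> S" using far bd_refl[OF n] r by force
      have "separated n r (insert x S)"
        using S far bd_sym[of n] unfolding separated_def by auto
      then have "card (insert x S) \<le> card S" using mx by blast
      then show False using xS S unfolding separated_def by simp
    qed
  qed
  then show ?thesis using S spanning_number_le by blast
qed

end

lemma cont_meas: "continuous_on UNIV g \<Longrightarrow> g \<in> borel \<rightarrow>\<^sub>M borel"
  by (rule borel_measurable_continuous_onI)

lemma meas_cong_borel: "sets M = sets borel \<Longrightarrow> g \<in> borel \<rightarrow>\<^sub>M N \<Longrightarrow> g \<in> M \<rightarrow>\<^sub>M N"
  using measurable_cong_sets[of M borel N N] by auto

definition dm :: "'a::topological_space pmf \<Rightarrow> 'a measure" where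
  "dm p = distr (measure_pmf p) borel (\<lambda>x. x)"

lemma dm_sets[simp]: "sets (dm p) = sets borel"
  unfolding dm_def by simp

lemma dm_prob: "dm p \<in> prob_measures"
  unfolding prob_measures_def dm_def
  by (auto intro!: measure_pmf.prob_space_distr simp: measurable_pmf_measure1)

lemma dm_integral: fixes g :: "'a::topological_space \<Rightarrow> real" shows "g \<in> borel_measurable borel \<Longrightarrow> integral\<^sup>L (dm p) g = measure_pmf.expectation p g"
  unfolding dm_def using integral_distr[of "\<lambda>x. x" "measure_pmf p" borel g] by (simp add: measurable_pmf_measure1)

lemma prob_measuresD: "\<nu> \<in> prob_measures \<Longrightarrow> prob_space \<nu> \<and> sets \<nu> = sets borel"
  unfolding prob_measures_def by auto

lemma coupling_dm:
  fixes p :: "'a::topological_space pmf"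
  assumes nu: "\<nu> \<in> prob_measures"
  shows "(measure_pmf p \<bind> (\<lambda>s. distr \<nu> borel (Pair s))) \<in> couplings (dm p) \<nu>"
proof -
  have pn: "prob_space \<nu>" and sn: "sets \<nu> = sets borel" using prob_measuresD[OF nu] by auto
  have pm: "Pair s \<in> \<nu> \<rightarrow>\<^sub>M borel" for s :: 'a
    by (rule meas_cong_borel[OF sn], rule cont_meas) (auto intro: continuous_intros)
  have K: "(\<lambda>s. distr \<nu> borel (Pair s)) \<in> measure_pmf p \<rightarrow>\<^sub>M subprob_algebra borel"
    unfolding measurable_pmf_measure1
    by (auto simp: space_subprob_algebra intro!: prob_space_imp_subprob_space prob_space.prob_space_distr[OF pn] pm)
  have sets_pi: "sets (measure_pmf p \<bind> (\<lambda>s. distr \<nu> borel (Pair s))) = sets borel"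
    by (rule sets_bind) auto
  have prob_pi: "prob_space (measure_pmf p \<bind> (\<lambda>s. distr \<nu> borel (Pair s)))"
    by (rule measure_pmf.prob_space_bind[OF _ K]) (auto intro: prob_space.prob_space_distr[OF pn] pm)
  have fstm: "fst \<in> (borel :: ('a\<times>'a) measure) \<rightarrow>\<^sub>M borel"
    by (rule cont_meas) (auto intro: continuous_intros)
  have sndm: "snd \<in> (borel :: ('a\<times>'a) measure) \<rightarrow>\<^sub>M borel"
    by (rule cont_meas) (auto intro: continuous_intros)
  have m1: "distr (measure_pmf p \<bind> (\<lambda>s. distr \<nu> borel (Pair s))) borel fst = dm p"
  proof -
    have "distr (measure_pmf p \<bind> (\<lambda>s. distr \<nu> borel (Pair s))) borel fst
       = measure_pmf p \<bind> (\<lambda>s. distr (distr \<nu> borel (Pair s)) borel fst)"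
      by (rule distr_bind[OF K _ fstm]) simp
    also have "\<dots> = measure_pmf p \<bind> (\<lambda>s. return borel s)"
    proof (rule bind_cong[OF refl])
      fix s :: 'a
      have "distr (distr \<nu> borel (Pair s)) borel fst = distr \<nu> borel (\<lambda>y. fst (s, y))"
        using distr_distr[OF fstm pm] by (simp add: o_def)
      also have "\<dots> = return borel s" using prob_space.distr_const[OF pn, of s borel] by simp
      finally show "distr (distr \<nu> borel (Pair s)) borel fst = return borel s" .
    qed
    also have "\<dots> = dm p" unfolding dm_def
      by (rule bind_return_distr') (auto simp: measurable_pmf_measure1)
    finally show ?thesis .
  qed
  have m2: "distr (measure_pmf p \<bind> (\<lambda>s. distr \<nu> borel (Pair s))) borel snd = \<nu>"
  proof -
    have "distr (measure_pmf p \<bind> (\<lambda>s. distr \<nu> borel (Pair s))) borel snd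
       = measure_pmf p \<bind> (\<lambda>s. distr (distr \<nu> borel (Pair s)) borel snd)"
      by (rule distr_bind[OF K _ sndm]) simp
    also have "\<dots> = measure_pmf p \<bind> (\<lambda>s. \<nu>)"
    proof (rule bind_cong[OF refl])
      fix s :: 'a
      have "distr (distr \<nu> borel (Pair s)) borel snd = distr \<nu> borel (\<lambda>y. snd (s, y))"
        using distr_distr[OF sndm pm] by (simp add: o_def)
      also have "\<dots> = \<nu>" using distr_id2[of borel \<nu>] sn by simp
      finally show "distr (distr \<nu> borel (Pair s)) borel snd = \<nu>" .
    qed
    also have "\<dots> = \<nu>"
      by (rule bind_const') (auto intro: prob_space_imp_subprob_space pn measure_pmf.prob_space_axioms)
    finally show ?thesis .
  qed
  show ?thesis unfolding couplings_def using sets_pi prob_pi m1 m2 by auto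
qed

context dyn begin

lemma bd_meas: "0 < n \<Longrightarrow> (\<lambda>p. bd n (fst p) (snd p)) \<in> borel \<rightarrow>\<^sub>M borel"
  by (rule cont_meas[OF bd_cont])

lemma coupling_props:
  assumes "\<pi> \<in> couplings \<mu> \<nu>"
  shows "prob_space \<pi>" "sets \<pi> = sets borel" "distr \<pi> borel fst = \<mu>" "distr \<pi> borel snd = \<nu>"
  using assms unfolding couplings_def by auto

lemma coupling_integrable:
  assumes "\<pi> \<in> couplings \<mu> \<nu>" "0 < n"
  shows "integrable \<pi> (\<lambda>p. bd n (fst p) (snd p))"
proof -
  interpret prob_space \<pi> using coupling_props[OF assms(1)] by simp
  show ?thesis
    by (rule integrable_const_bound[where B=D])
       (use bd_le_D[OF assms(2)] bd_nonneg[OF assms(2)] in \<open>auto intro!: meas_cong_borel[OF coupling_props(2)[OF assms(1)]] bd_meas[OF assms(2)]\<close>)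
qed

lemma W_le:
  assumes "\<pi> \<in> couplings \<mu> \<nu>" "0 < n"
  shows "wasserstein_n f n \<mu> \<nu> \<le> integral\<^sup>L \<pi> (\<lambda>p. bd n (fst p) (snd p))"
  unfolding wasserstein_n_def
proof (rule cINF_lower[OF _ assms(1)])
  show "bdd_below ((\<lambda>\<pi>. integral\<^sup>L \<pi> (\<lambda>p. bd n (fst p) (snd p))) ` couplings \<mu> \<nu>)"
    by (rule bdd_belowI[of _ 0]) (auto intro!: integral_nonneg_AE bd_nonneg[OF assms(2)])
qed

lemma kantorovich:
  assumes pi: "\<pi> \<in> couplings \<mu> \<nu>" and n: "0 < n"
    and gm: "g \<in> borel \<rightarrow>\<^sub>M borel" and gb: "\<And>x. \<bar>g x\<bar> \<le> B"
    and lip: "\<And>x y. g x - g y \<le> bd n x y"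
  shows "integral\<^sup>L \<mu> g - integral\<^sup>L \<nu> g \<le> integral\<^sup>L \<pi> (\<lambda>p. bd n (fst p) (snd p))"
proof -
  interpret prob_space \<pi> using coupling_props[OF pi] by simp
  have sp: "sets \<pi> = sets borel" using coupling_props[OF pi] by simp
  have fstm: "fst \<in> \<pi> \<rightarrow>\<^sub>M borel"
    by (rule meas_cong_borel[OF sp], rule cont_meas) (auto intro: continuous_intros)
  have sndm: "snd \<in> \<pi> \<rightarrow>\<^sub>M borel"
    by (rule meas_cong_borel[OF sp], rule cont_meas) (auto intro: continuous_intros)
  have i1: "integral\<^sup>L \<mu> g = integral\<^sup>L \<pi> (\<lambda>p. g (fst p))"
    using integral_distr[OF fstm gm] coupling_props(3)[OF pi] by simp
  have i2: "integral\<^sup>L \<nu> g = integral\<^sup>L \<pi> (\<lambda>p. g (snd p))"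
    using integral_distr[OF sndm gm] coupling_props(4)[OF pi] by simp
  have int1: "integrable \<pi> (\<lambda>p. g (fst p))"
    by (rule integrable_const_bound[where B=B]) (use gb in \<open>auto intro: measurable_compose[OF fstm gm]\<close>)
  have int2: "integrable \<pi> (\<lambda>p. g (snd p))"
    by (rule integrable_const_bound[where B=B]) (use gb in \<open>auto intro: measurable_compose[OF sndm gm]\<close>)
  have "integral\<^sup>L \<mu> g - integral\<^sup>L \<nu> g = integral\<^sup>L \<pi> (\<lambda>p. g (fst p) - g (snd p))"
    using i1 i2 Bochner_Integration.integral_diff[OF int1 int2] by simp
  also have "\<dots> \<le> integral\<^sup>L \<pi> (\<lambda>p. bd n (fst p) (snd p))"
    by (rule integral_mono[OF Bochner_Integration.integrable_diff[OF int1 int2] coupling_integrable[OF pi n]])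
       (use lip in auto)
  finally show ?thesis .
qed

lemma kantorovich_W:
  assumes ne: "couplings \<mu> \<nu> \<noteq> {}" and n: "0 < n"
    and gm: "g \<in> borel \<rightarrow>\<^sub>M borel" and gb: "\<And>x. \<bar>g x\<bar> \<le> B"
    and lip: "\<And>x y. g x - g y \<le> bd n x y"
  shows "integral\<^sup>L \<mu> g - integral\<^sup>L \<nu> g \<le> wasserstein_n f n \<mu> \<nu>"
  unfolding wasserstein_n_def
  by (rule cINF_greatest[OF ne]) (rule kantorovich[OF _ n gm gb lip])

end

context dyn begin

definition bump :: "nat \<Rightarrow> real \<Rightarrow> 'a \<Rightarrow> 'a \<Rightarrow> real" where
  "bump n r s x = max 0 (2*r - bd n x s)"

lemma bump_nonneg: "0 \<le> bump n r s x" unfolding bump_def by simp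

lemma bump_le: "0 < n \<Longrightarrow> bump n r s x \<le> 2*r - bd n x s \<or> bump n r s x = 0"
  unfolding bump_def by auto

lemma bump_lip: "0 < n \<Longrightarrow> bump n r s x - bump n r s y \<le> bd n x y"
proof -
  assume n: "0 < n"
  have "bd n y s \<le> bd n y x + bd n x s" by (rule bd_triangle[OF n])
  then show ?thesis unfolding bump_def using bd_sym[of n x y] bd_nonneg[OF n, of x y] by auto
qed

lemma bump_self: "0 < n \<Longrightarrow> bump n r s s = max 0 (2*r)"
  unfolding bump_def using bd_refl by simp

lemma bump_far: "2*r \<le> bd n x s \<Longrightarrow> bump n r s x = 0"
  unfolding bump_def by simp

definition gsum :: "nat \<Rightarrow> real \<Rightarrow> 'a set \<Rightarrow> ('a \<Rightarrow> real) \<Rightarrow> 'a \<Rightarrow> real" where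
  "gsum n r S c x = (\<Sum>s\<in>S. c s * bump n r s x)"

lemma gsum_single:
  assumes n: "0 < n" and S: "separated n (4*r) S" and sS: "s \<in> S"
    and pos: "0 < bump n r s x"
  shows "gsum n r S c x = c s * bump n r s x"
proof -
  have fin: "finite S" using S separated_def by auto
  have z: "c t * bump n r t x = 0" if "t \<in> S - {s}" for t
  proof -
    have ts: "t \<noteq> s" "t \<in> S" using that by auto
    have "4*r < bd n t s" using S ts sS unfolding separated_def by auto
    moreover have "bd n t s \<le> bd n t x + bd n x s" by (rule bd_triangle[OF n])
    moreover have "bd n x s < 2*r" using pos unfolding bump_def by (auto simp: max_def split: if_splits)
    ultimately have "2*r \<le> bd n x t" using bd_sym[of n t x] by auto
    then show ?thesis using bump_far by simp
  qed
  have "gsum n r S c x = c s * bump n r s x + (\<Sum>t\<in>S-{s}. c t * bump n r t x)"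
    unfolding gsum_def by (rule sum.remove[OF fin sS])
  also have "(\<Sum>t\<in>S-{s}. c t * bump n r t x) = 0" by (rule sum.neutral) (use z in blast)
  finally show ?thesis by simp
qed

lemma gsum_zero:
  assumes "\<forall>s\<in>S. bump n r s x = 0"
  shows "gsum n r S c x = 0"
  unfolding gsum_def using assms by simp

lemma gsum_lip:
  assumes n: "0 < n" and S: "separated n (4*r) S" and c: "\<And>s. \<bar>c s\<bar> \<le> 1"
  shows "gsum n r S c x - gsum n r S c y \<le> bd n x y"
proof -
  have cb: "c s * b \<le> b" "- (c s * b) \<le> b" if "0 \<le> b" for s b
  proof -
    have "0 \<le> (1 - c s) * b" "0 \<le> (1 + c s) * b" using c[of s] that by (auto simp: abs_le_iff)
    then show "c s * b \<le> b" "- (c s * b) \<le> b" by (auto simp: algebra_simps)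
  qed
  have cb2: "c s * a - c s * b \<le> \<bar>a - b\<bar>" for s a b
  proof -
    have "c s * a - c s * b = c s * (a - b)" by (simp add: algebra_simps)
    also have "\<dots> \<le> \<bar>c s * (a - b)\<bar>" by simp
    also have "\<dots> \<le> \<bar>a - b\<bar>" using c[of s] by (simp add: abs_mult mult_left_le_one_le)
    finally show ?thesis .
  qed
  have bdxy: "0 \<le> bd n x y" using bd_nonneg[OF n] by simp
  consider (nx) "\<forall>s\<in>S. bump n r s x = 0" | (sx) s where "s \<in> S" "0 < bump n r s x"
    using bump_nonneg by (metis less_eq_real_def)
  then show ?thesis
  proof cases
    case nx
    then have gx: "gsum n r S c x = 0" by (rule gsum_zero)
    consider (ny) "\<forall>s\<in>S. bump n r s y = 0" | (ty) t where "t \<in> S" "0 < bump n r t y"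
      using bump_nonneg by (metis less_eq_real_def)
    then show ?thesis
    proof cases
      case ny then show ?thesis using gx gsum_zero[OF ny] bdxy by simp
    next
      case ty
      have "- (c t * bump n r t y) \<le> bump n r t y" using cb(2) bump_nonneg by blast
      also have "\<dots> = bump n r t y - bump n r t x" using nx ty by simp
      also have "\<dots> \<le> bd n y x" by (rule bump_lip[OF n])
      finally show ?thesis using gx gsum_single[OF n S ty] bd_sym[of n x y] by simp
    qed
  next
    case sx
    have gx: "gsum n r S c x = c s * bump n r s x" by (rule gsum_single[OF n S sx])
    consider (ny) "\<forall>s\<in>S. bump n r s y = 0" | (ty) t where "t \<in> S" "0 < bump n r t y"
      using bump_nonneg by (metis less_eq_real_def)
    then show ?thesis
    proof cases
      case ny
      have "c s * bump n r s x \<le> bump n r s x" using cb(1) bump_nonneg by blast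
      also have "\<dots> = bump n r s x - bump n r s y" using ny sx by simp
      also have "\<dots> \<le> bd n x y" by (rule bump_lip[OF n])
      finally show ?thesis using gx gsum_zero[OF ny] by simp
    next
      case ty
      have gy: "gsum n r S c y = c t * bump n r t y" by (rule gsum_single[OF n S ty])
      show ?thesis
      proof (cases "s = t")
        case True
        have "c s * bump n r s x - c s * bump n r s y \<le> \<bar>bump n r s x - bump n r s y\<bar>" by (rule cb2)
        also have "\<dots> \<le> bd n x y" using bump_lip[OF n, of r s x y] bump_lip[OF n, of r s y x] bd_sym[of n x y] by auto
        finally show ?thesis using gx gy True by simp
      next
        case False
        have st: "4*r < bd n s t" using S sx ty False unfolding separated_def by auto
        have tri: "bd n s t \<le> bd n s x + bd n x t" "bd n x t \<le> bd n x y + bd n y t" using bd_triangle[OF n] by auto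
        have bx: "bump n r s x \<le> 2*r - bd n x s" using sx(2) unfolding bump_def by (auto simp: max_def split: if_splits)
        have by': "bump n r t y \<le> 2*r - bd n y t" using ty(2) unfolding bump_def by (auto simp: max_def split: if_splits)
        have "c s * bump n r s x - c t * bump n r t y \<le> bump n r s x + bump n r t y"
          using cb(1)[of "bump n r s x" s] cb(2)[of "bump n r t y" t] bump_nonneg by (metis add_mono diff_conv_add_uminus)
        also have "\<dots> \<le> bd n x y" using st tri bx by' bd_sym[of n x s] by auto
        finally show ?thesis using gx gy by simp
      qed
    qed
  qed
qed

lemma gsum_cont: "0 < n \<Longrightarrow> continuous_on UNIV (gsum n r S c)"
  unfolding gsum_def bump_def
  by (intro continuous_on_sum continuous_on_mult continuous_on_const continuous_on_max continuous_on_diff bd_cont1)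

lemma gsum_bound:
  assumes n: "0 < n" and c: "\<And>s. \<bar>c s\<bar> \<le> 1" and r: "0 \<le> r"
  shows "\<bar>gsum n r S c x\<bar> \<le> real (card S) * (2*r)"
proof -
  have "\<bar>gsum n r S c x\<bar> \<le> (\<Sum>s\<in>S. \<bar>c s * bump n r s x\<bar>)" unfolding gsum_def by (rule sum_abs)
  also have "\<dots> \<le> (\<Sum>s\<in>S. 2*r)"
  proof (rule sum_mono)
    fix s
    have "bump n r s x \<le> 2*r" unfolding bump_def using bd_nonneg[OF n] r by auto
    then show "\<bar>c s * bump n r s x\<bar> \<le> 2*r"
      using c[of s] bump_nonneg[of n r s x] by (simp add: abs_mult mult_le_one mult_left_le_one_le order_trans[OF mult_left_le_one_le])
  qed
  finally show ?thesis by simp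
qed

end

lemma sum_ind_real: "finite S \<Longrightarrow> (\<Sum>s\<in>S. indicator X s :: real) = real (card (S \<inter> X))"
proof -
  assume fin: "finite S"
  have "(\<Sum>s\<in>S. indicator X s :: real) = (\<Sum>s\<in>S. if s \<in> X then 1 else 0)"
    by (rule sum.cong) (auto simp: indicator_def)
  also have "\<dots> = (\<Sum>s\<in>S \<inter> X. 1)" by (rule sum.inter_restrict[OF fin, symmetric])
  finally show ?thesis by simp
qed

context dyn begin

definition mB :: "'a set \<Rightarrow> 'a \<Rightarrow> 'a set \<Rightarrow> 'a measure" where
  "mB S s0 B = dm (map_pmf (\<lambda>s. if s \<in> B then s else s0) (pmf_of_set S))"

lemma mB_prob: "mB S s0 B \<in> prob_measures" unfolding mB_def by (rule dm_prob)

lemma mB_integral: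
  assumes "finite S" "S \<noteq> {}" "g \<in> borel \<rightarrow>\<^sub>M borel"
  shows "integral\<^sup>L (mB S s0 B) g = (\<Sum>s\<in>S. g (if s \<in> B then s else s0)) / real (card S)"
  unfolding mB_def using assms by (simp add: dm_integral integral_map_pmf integral_pmf_of_set)

lemma gsum_at:
  assumes n: "0 < n" and r: "0 < r" and S: "separated n (4*r) S" and s: "s \<in> S"
  shows "gsum n r S c s = c s * (2*r)"
proof -
  have "bump n r s s = 2*r" using bump_self[OF n] r by simp
  then show ?thesis using gsum_single[OF n S s, where c=c] r by simp
qed

lemma integral_gB:
  assumes n: "0 < n" and r: "0 < r" and S: "separated n (4*r) S" and s0: "s0 \<in> S"
    and B: "B \<subseteq> S - {s0}" and B': "B' \<subseteq> S - {s0}"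
  shows "integral\<^sup>L (mB S s0 B) (gsum n r S (\<lambda>s. indicator B s - indicator B' s))
     = 2*r * real (card (B - B')) / real (card S)"
proof -
  let ?c = "\<lambda>s. indicator B s - indicator B' s :: real"
  have fin: "finite S" and ne: "S \<noteq> {}" using S s0 unfolding separated_def by auto
  have gm: "gsum n r S ?c \<in> borel \<rightarrow>\<^sub>M borel" by (rule cont_meas[OF gsum_cont[OF n]])
  have "(\<Sum>s\<in>S. gsum n r S ?c (if s \<in> B then s else s0)) = (\<Sum>s\<in>S. 2*r * indicator (B - B') s)"
  proof (rule sum.cong[OF refl])
    fix s assume sS: "s \<in> S"
    have hs: "(if s \<in> B then s else s0) \<in> S" using sS s0 by auto
    show "gsum n r S ?c (if s \<in> B then s else s0) = 2*r * indicator (B - B') s"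
      unfolding gsum_at[OF n r S hs] using B B' s0 by (auto simp: indicator_def)
  qed
  also have "\<dots> = 2*r * real (card (S \<inter> (B - B')))"
    by (simp add: sum_distrib_left[symmetric] sum_ind_real[OF fin])
  also have "S \<inter> (B - B') = B - B'" using B by auto
  finally show ?thesis using mB_integral[OF fin ne gm] by simp
qed

lemma symdiff_bound:
  assumes n: "0 < n" and r: "0 < r" and S: "separated n (4*r) S" and s0: "s0 \<in> S"
    and B: "B \<subseteq> S - {s0}" and B': "B' \<subseteq> S - {s0}" and nu: "\<nu> \<in> prob_measures"
    and W1: "wasserstein_n f n (mB S s0 B) \<nu> \<le> e" and W2: "wasserstein_n f n (mB S s0 B') \<nu> \<le> e"
  shows "2*r * real (card (B - B') + card (B' - B)) \<le> 2*e * real (card S)"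
proof -
  let ?c = "\<lambda>s. indicator B s - indicator B' s :: real"
  let ?c' = "\<lambda>s. indicator B' s - indicator B s :: real"
  have fin: "finite S" and ne: "S \<noteq> {}" using S s0 unfolding separated_def by auto
  have K: "0 < real (card S)" using fin ne by (simp add: card_gt_0_iff)
  have cb: "\<bar>?c s\<bar> \<le> 1" "\<bar>?c' s\<bar> \<le> 1" for s by (auto simp: indicator_def)
  have neg: "gsum n r S ?c' x = - gsum n r S ?c x" for x
    unfolding gsum_def by (simp add: sum_negf[symmetric] algebra_simps)
  have ne1: "couplings (mB S s0 B) \<nu> \<noteq> {}" unfolding mB_def using coupling_dm[OF nu] by blast
  have ne2: "couplings (mB S s0 B') \<nu> \<noteq> {}" unfolding mB_def using coupling_dm[OF nu] by blast
  have lip1: "\<And>x y. gsum n r S ?c x - gsum n r S ?c y \<le> bd n x y"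
    by (rule gsum_lip[OF n S]) (auto simp: indicator_def)
  have lip2: "\<And>x y. gsum n r S ?c' x - gsum n r S ?c' y \<le> bd n x y"
    by (rule gsum_lip[OF n S]) (auto simp: indicator_def)
  have bnd1: "\<And>x. \<bar>gsum n r S ?c x\<bar> \<le> real (card S) * (2*r)"
    by (rule gsum_bound[OF n]) (use r in \<open>auto simp: indicator_def\<close>)
  have bnd2: "\<And>x. \<bar>gsum n r S ?c' x\<bar> \<le> real (card S) * (2*r)"
    by (rule gsum_bound[OF n]) (use r in \<open>auto simp: indicator_def\<close>)
  have k1: "integral\<^sup>L (mB S s0 B) (gsum n r S ?c) - integral\<^sup>L \<nu> (gsum n r S ?c) \<le> e"
    using kantorovich_W[OF ne1 n cont_meas[OF gsum_cont[OF n]] bnd1 lip1] W1 by simp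
  have k2: "integral\<^sup>L (mB S s0 B') (gsum n r S ?c') - integral\<^sup>L \<nu> (gsum n r S ?c') \<le> e"
    using kantorovich_W[OF ne2 n cont_meas[OF gsum_cont[OF n]] bnd2 lip2] W2 by simp
  have i2: "integral\<^sup>L \<nu> (gsum n r S ?c') = - integral\<^sup>L \<nu> (gsum n r S ?c)"
    unfolding neg by (rule integral_minus)
  have "2*r * real (card (B - B')) / real (card S) + 2*r * real (card (B' - B)) / real (card S) \<le> 2*e"
    using k1 k2 i2 integral_gB[OF n r S s0 B B'] integral_gB[OF n r S s0 B' B] by simp
  then have "(2*r * real (card (B - B')) + 2*r * real (card (B' - B))) / real (card S) \<le> 2*e"
    by (simp add: add_divide_distrib)
  then show ?thesis using K by (simp add: divide_le_eq algebra_simps)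
qed

end

lemma ball_card:
  assumes fin: "finite T"
  shows "card {A. A \<subseteq> T \<and> card A \<le> j} \<le> (\<Sum>i\<le>j. card T choose i)"
proof -
  have "{A. A \<subseteq> T \<and> card A \<le> j} = (\<Union>i\<in>{..j}. {A. A \<subseteq> T \<and> card A = i})" by auto
  then have "card {A. A \<subseteq> T \<and> card A \<le> j} \<le> (\<Sum>i\<le>j. card {A. A \<subseteq> T \<and> card A = i})"
    using card_UN_le[of "{..j}" "\<lambda>i. {A. A \<subseteq> T \<and> card A = i}"] by simp
  also have "\<dots> = (\<Sum>i\<le>j. card T choose i)" using n_subsets[OF fin] by simp
  finally show ?thesis .
qed

lemma cover_count:
  fixes E :: "'b set" and P :: "'a set \<Rightarrow> 'b \<Rightarrow> bool"
  assumes fin: "finite T" "finite E"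
    and cov: "\<And>B. B \<subseteq> T \<Longrightarrow> \<exists>\<nu>\<in>E. P B \<nu>"
    and close: "\<And>\<nu> B B'. B \<subseteq> T \<Longrightarrow> B' \<subseteq> T \<Longrightarrow> P B \<nu> \<Longrightarrow> P B' \<nu> \<Longrightarrow> card (B - B') + card (B' - B) \<le> j"
  shows "2 ^ card T \<le> card E * (\<Sum>i\<le>j. card T choose i)"
proof -
  let ?C = "\<lambda>\<nu>. {B. B \<subseteq> T \<and> P B \<nu>}"
  have sub: "Pow T \<subseteq> (\<Union>\<nu>\<in>E. ?C \<nu>)" using cov by blast
  have finU: "finite (\<Union>\<nu>\<in>E. ?C \<nu>)" using fin by auto
  have C: "card (?C \<nu>) \<le> (\<Sum>i\<le>j. card T choose i)" for \<nu>
  proof (cases "?C \<nu> = {}")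
    case True then show ?thesis by (simp only: card.empty)
  next
    case False
    then obtain B0 where B0: "B0 \<subseteq> T" "P B0 \<nu>" by auto
    let ?h = "\<lambda>B. (B - B0) \<union> (B0 - B)"
    have inj: "inj_on ?h (?C \<nu>)"
    proof (rule inj_onI)
      fix B B' assume "B \<in> ?C \<nu>" "B' \<in> ?C \<nu>" "?h B = ?h B'"
      then show "B = B'" by blast
    qed
    have img: "?h ` ?C \<nu> \<subseteq> {A. A \<subseteq> T \<and> card A \<le> j}"
    proof
      fix A assume "A \<in> ?h ` ?C \<nu>"
      then obtain B where B: "B \<subseteq> T" "P B \<nu>" "A = ?h B" by auto
      have "card A \<le> card (B - B0) + card (B0 - B)" using B(3) by (simp add: card_Un_le)
      also have "\<dots> \<le> j" using close[OF B(1) B0(1) B(2) B0(2)] .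
      finally show "A \<in> {A. A \<subseteq> T \<and> card A \<le> j}" using B B0 by auto
    qed
    have "finite {A. A \<subseteq> T \<and> card A \<le> j}" using fin by auto
    then have "card (?C \<nu>) \<le> card {A. A \<subseteq> T \<and> card A \<le> j}"
      using card_inj_on_le[OF inj img] by simp
    also have "\<dots> \<le> (\<Sum>i\<le>j. card T choose i)" by (rule ball_card[OF fin(1)])
    finally show ?thesis .
  qed
  have "2 ^ card T = card (Pow T)" using fin by (simp add: card_Pow)
  also have "\<dots> \<le> card (\<Union>\<nu>\<in>E. ?C \<nu>)" by (rule card_mono[OF finU sub])
  also have "\<dots> \<le> (\<Sum>\<nu>\<in>E. card (?C \<nu>))" by (rule card_UN_le[OF fin(2)])
  also have "\<dots> \<le> (\<Sum>\<nu>\<in>E. (\<Sum>i\<le>j. card T choose i))" by (rule sum_mono[OF C])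
  finally show ?thesis by simp
qed

lemma binom_partial_le:
  fixes x :: real
  assumes x: "0 \<le> x"
  shows "(\<Sum>i\<le>m. real (L choose i) * x ^ i) \<le> (1 + x) ^ L"
proof -
  have eq: "(1 + x) ^ L = (\<Sum>i\<le>L. real (L choose i) * x ^ i)"
    using binomial_ring[of x 1 L] by (simp add: add.commute)
  show ?thesis
  proof (cases "m \<le> L")
    case True
    have "(\<Sum>i\<le>m. real (L choose i) * x ^ i) \<le> (\<Sum>i\<le>L. real (L choose i) * x ^ i)"
      by (rule sum_mono2) (use True x in auto)
    then show ?thesis using eq by simp
  next
    case False
    have "(\<Sum>i\<le>m. real (L choose i) * x ^ i) = (\<Sum>i\<le>L. real (L choose i) * x ^ i)"
      by (rule sum.mono_neutral_right) (use False in auto)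
    then show ?thesis using eq by simp
  qed
qed

lemma binom_ball_bound:
  "real (\<Sum>i\<le>j. L choose i) \<le> 8 ^ j * (9/8) ^ L"
proof -
  have "real (\<Sum>i\<le>j. L choose i) = (\<Sum>i\<le>j. real (L choose i))" by simp
  also have "\<dots> \<le> (\<Sum>i\<le>j. 8 ^ j * (real (L choose i) * (1/8) ^ i))"
  proof (rule sum_mono)
    fix i assume "i \<in> {..j}"
    then have ij: "i \<le> j" by simp
    have "(8::real) ^ j * (1/8) ^ i = 8 ^ (j - i)"
      using ij by (simp add: power_diff power_one_over)
    moreover have "(1::real) \<le> 8 ^ (j - i)" by simp
    ultimately have "1 \<le> (8::real) ^ j * (1/8) ^ i" by simp
    then show "real (L choose i) \<le> 8 ^ j * (real (L choose i) * (1/8) ^ i)"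
      using mult_right_mono[of 1 "(8::real) ^ j * (1/8) ^ i" "real (L choose i)"] by (simp add: algebra_simps)
  qed
  also have "\<dots> = 8 ^ j * (\<Sum>i\<le>j. real (L choose i) * (1/8) ^ i)" by (simp add: sum_distrib_left)
  also have "\<dots> \<le> 8 ^ j * (1 + 1/8) ^ L" by (rule mult_left_mono[OF binom_partial_le]) auto
  finally show ?thesis by simp
qed

lemma count_to_log:
  fixes N L j :: nat
  assumes h: "2 ^ L \<le> N * (\<Sum>i\<le>j. L choose i)" and jL: "8 * j \<le> L"
  shows "real L / 4 \<le> ln (real N)"
proof -
  have "(2::real) ^ L \<le> real N * (8 ^ j * (9/8) ^ L)"
  proof -
    have "(2::real) ^ L \<le> real N * real (\<Sum>i\<le>j. L choose i)"
      using h by (metis of_nat_le_iff of_nat_mult of_nat_numeral of_nat_power)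
    also have "\<dots> \<le> real N * (8 ^ j * (9/8) ^ L)" by (rule mult_left_mono[OF binom_ball_bound]) auto
    finally show ?thesis .
  qed
  moreover have p: "(0::real) < 2 ^ L" by simp
  ultimately have Npos: "0 < N"
  proof -
    assume a: "(2::real) ^ L \<le> real N * (8 ^ j * (9/8) ^ L)"
    show "0 < N"
    proof (rule ccontr)
      assume "\<not> 0 < N"
      then have "N = 0" by simp
      then show False using a p by simp
    qed
  qed
  have "ln ((2::real) ^ L) \<le> ln (real N * (8 ^ j * (9/8) ^ L))"
    using \<open>(2::real) ^ L \<le> _\<close> Npos by (subst ln_le_cancel_iff) auto
  then have "real L * ln 2 \<le> ln (real N) + real j * ln 8 + real L * ln (9/8)"
    using Npos by (simp add: ln_mult ln_realpow)
  moreover have l8: "ln (8::real) = 3 * ln 2" using ln_realpow[of 2 3] by simp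
  moreover have l98: "ln (9/8::real) \<le> 1/8" using ln_le_minus_one[of "9/8"] by simp
  have jL': "real j * 8 \<le> real L" using jL by linarith
  have l2: "2/3 \<le> ln (2::real)" by (rule ln2_ge_two_thirds)
  have t1: "real j * ln 8 \<le> real L * (3/8) * ln 2"
  proof -
    have "real j * ln 8 = (real j * 8) * ((3/8) * ln 2)" using l8 by simp
    also have "\<dots> \<le> real L * ((3/8) * ln 2)" by (rule mult_right_mono[OF jL']) (use l2 in simp)
    finally show ?thesis by simp
  qed
  have t2: "real L * ln (9/8) \<le> real L * (1/8)" by (rule mult_left_mono[OF l98]) simp
  ultimately have "real L * ln 2 \<le> ln (real N) + real L * (3/8) * ln 2 + real L * (1/8)"
    using t1 t2 by linarith
  then have "real L * ((5/8) * ln 2 - 1/8) \<le> ln (real N)" by (simp add: algebra_simps)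
  moreover have "1/4 \<le> (5/8) * ln (2::real) - 1/8" using l2 by simp
  moreover have "real L * (1/4) \<le> real L * ((5/8) * ln 2 - 1/8)" by (rule mult_left_mono[OF calculation(2)]) simp
  ultimately show ?thesis by simp
qed


lemma lg_pos: "0 < x \<Longrightarrow> lg x = ln x" unfolding lg_def by simp

lemma lglg_ge: "-1 \<le> lg (lg (real N))"
proof (cases "N \<le> 1")
  case True
  then have "lg (real N) = 0" unfolding lg_def by (cases N) auto
  then show ?thesis unfolding lg_def by simp
next
  case False
  then have N2: "2 \<le> real N" by simp
  have "ln 2 \<le> ln (real N)" using N2 by simp
  moreover have "2/3 \<le> ln (2::real)" by (rule ln2_ge_two_thirds)
  ultimately have l: "2/3 \<le> ln (real N)" by simp
  then have "lg (real N) = ln (real N)" using N2 by (simp add: lg_pos)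
  moreover have "ln (2/3) \<le> ln (ln (real N))" using l by simp
  moreover have "ln (3/2::real) \<le> 1/2" using ln_le_minus_one[of "3/2"] by simp
  moreover have "ln (2/3::real) = - ln (3/2)" by (simp add: ln_div)
  ultimately show ?thesis using l unfolding lg_def by simp
qed

context dyn begin

lemma lower_bound:
  assumes n: "0 < n" and r: "0 < r" and finE: "finite E" and EP: "E \<subseteq> prob_measures"
    and cov: "\<forall>\<mu>\<in>prob_measures. \<exists>\<nu>\<in>E. wasserstein_n f n \<mu> \<nu> \<le> r/16"
  shows "ln (real (spanning_number f n (4*r))) - 3 \<le> lg (lg (real (card E)))"
proof -
  obtain S where S: "separated n (4*r) S" and SN: "spanning_number f n (4*r) \<le> card S"
    using separated_big[OF n, of "4*r"] r by auto
  have SN1: "1 \<le> spanning_number f n (4*r)" using spanning_number_pos[OF n] r by simp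
  have finS: "finite S" using S separated_def by auto
  let ?K = "card S"
  have lnSN: "ln (real (spanning_number f n (4*r))) \<le> ln (real ?K)"
    using SN SN1 by simp
  show ?thesis
  proof (cases "?K \<le> 1")
    case True
    then have "ln (real ?K) \<le> 0" by (cases ?K) auto
    then show ?thesis using lnSN lglg_ge[of "card E"] by linarith
  next
    case False
    then have K2: "2 \<le> ?K" by simp
    then obtain s0 where s0: "s0 \<in> S" by (metis card.empty ex_in_conv not_numeral_le_zero)
    define T where "T = S - {s0}"
    have finT: "finite T" using finS T_def by simp
    have cT: "card T = ?K - 1" using s0 finS T_def by simp
    define P where "P B \<nu> \<longleftrightarrow> \<nu> \<in> prob_measures \<and> wasserstein_n f n (mB S s0 B) \<nu> \<le> r/16" for B \<nu>
    have c: "2 ^ card T \<le> card E * (\<Sum>i\<le>?K div 16. card T choose i)"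
    proof (rule cover_count[OF finT finE])
      fix B assume "B \<subseteq> T"
      show "\<exists>\<nu>\<in>E. P B \<nu>" using cov mB_prob EP unfolding P_def by blast
    next
      fix \<nu> B B' assume B: "B \<subseteq> T" "B' \<subseteq> T" "P B \<nu>" "P B' \<nu>"
      have "2*r * real (card (B - B') + card (B' - B)) \<le> 2*(r/16) * real ?K"
        by (rule symdiff_bound[OF n r S s0]) (use B in \<open>auto simp: P_def T_def\<close>)
      then have "r * (real (card (B - B') + card (B' - B)) * 16) \<le> r * real ?K" by (simp add: algebra_simps)
      then have "real (card (B - B') + card (B' - B)) * 16 \<le> real ?K" using r by (simp only: mult_le_cancel_left_pos)
      then have "(card (B - B') + card (B' - B)) * 16 \<le> ?K" by linarith
      then show "card (B - B') + card (B' - B) \<le> ?K div 16" using div_le_mono[of "(card (B - B') + card (B' - B)) * 16" ?K 16] by simp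
    qed
    have "8 * (?K div 16) \<le> card T" using K2 cT by linarith
    from count_to_log[OF c this] have lE: "real (card T) / 4 \<le> ln (real (card E))" .
    have Kb: "real ?K / 8 \<le> ln (real (card E))" using lE cT K2 by linarith
    have Kp: "0 < real ?K / 8" using K2 by simp
    have E0: "0 < real (card E)"
    proof (rule ccontr)
      assume "\<not> 0 < real (card E)"
      then have "real (card E) = 0" by simp
      then show False using Kb Kp by simp
    qed
    have lgE: "lg (real (card E)) = ln (real (card E))" using E0 by (simp add: lg_pos)
    have "ln (real ?K / 8) \<le> ln (ln (real (card E)))" using Kb Kp by simp
    moreover have "ln (real ?K / 8) = ln (real ?K) - ln 8" using K2 by (simp add: ln_div)
    moreover have "ln (8::real) \<le> 3" using ln_realpow[of 2 3] ln_2_less_1 by simp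
    ultimately have "ln (real ?K) - 3 \<le> ln (ln (real (card E)))" by linarith
    moreover have "lg (ln (real (card E))) = ln (ln (real (card E)))" using Kb Kp by (simp add: lg_pos)
    ultimately show ?thesis using lnSN lgE by simp
  qed
qed

end

context dyn begin

primrec sel :: "nat \<Rightarrow> real \<Rightarrow> 'a \<Rightarrow> 'a list \<Rightarrow> 'a \<Rightarrow> 'a" where
  "sel n e d [] x = d"
| "sel n e d (y # ys) x = (if bd n x y \<le> e then y else sel n e d ys x)"

lemma sel_in: "sel n e d ys x \<in> insert d (set ys)"
  by (induction ys) auto

lemma sel_close: "\<exists>y\<in>set ys. bd n x y \<le> e \<Longrightarrow> sel n e d ys x \<in> set ys \<and> bd n x (sel n e d ys x) \<le> e"
  by (induction ys) auto

lemma close_set: "0 < n \<Longrightarrow> {x \<in> space borel. bd n x y \<le> e} \<in> sets borel"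
proof -
  assume n: "0 < n"
  have "(\<lambda>x. bd n x y) -` {..e} \<inter> space borel \<in> sets borel"
    by (rule measurable_sets[OF cont_meas[OF bd_cont1[OF n]]]) simp
  moreover have "(\<lambda>x. bd n x y) -` {..e} \<inter> space borel = {x \<in> space borel. bd n x y \<le> e}" by auto
  ultimately show ?thesis by simp
qed

lemma sel_meas_gen:
  assumes n: "0 < n" and h: "\<And>y. h y \<in> borel \<rightarrow>\<^sub>M N"
  shows "(\<lambda>x. h (sel n e d ys x) x) \<in> borel \<rightarrow>\<^sub>M N"
proof (induction ys)
  case Nil then show ?case using h by simp
next
  case (Cons y ys)
  have "(\<lambda>x. if bd n x y \<le> e then h y x else h (sel n e d ys x) x) \<in> borel \<rightarrow>\<^sub>M N"
    by (rule measurable_If[OF h Cons close_set[OF n]])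
  moreover have "(\<lambda>x. h (sel n e d (y # ys) x) x) = (\<lambda>x. if bd n x y \<le> e then h y x else h (sel n e d ys x) x)"
    by auto
  ultimately show ?case by simp
qed

lemma sel_meas_const:
  assumes n: "0 < n" and h: "\<And>y. h y \<in> space N"
  shows "(\<lambda>x. h (sel n e d ys x)) \<in> borel \<rightarrow>\<^sub>M N"
  using sel_meas_gen[OF n, of "\<lambda>y x. h y" N] h by simp

lemma sel_meas_pair:
  assumes n: "0 < n"
  shows "(\<lambda>x. (x, sel n e d ys x)) \<in> borel \<rightarrow>\<^sub>M borel"
  using sel_meas_gen[OF n, of "\<lambda>y x. (x, y)" borel] 
  by (simp add: cont_meas continuous_intros)

lemma sel_meas: "0 < n \<Longrightarrow> sel n e d ys \<in> borel \<rightarrow>\<^sub>M borel"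
  using sel_meas_gen[of n "\<lambda>y x. y" borel] by simp

lemma sel_fiber: "0 < n \<Longrightarrow> {x. sel n e d ys x = y} \<in> sets borel"
proof -
  assume n: "0 < n"
  have "sel n e d ys -` {y} \<inter> space borel \<in> sets borel"
    by (rule measurable_sets[OF sel_meas[OF n]]) simp
  then show ?thesis by (simp add: vimage_def)
qed

lemma nn_integral_fiber:
  fixes \<phi> :: "'a \<Rightarrow> 'a" and G :: "'a \<Rightarrow> ennreal"
  assumes finF: "finite F" and rng: "\<And>x. \<phi> x \<in> F" and fib: "\<And>y. {x. \<phi> x = y} \<in> sets M"
    and sp: "space M = UNIV"
  shows "(\<integral>\<^sup>+x. G (\<phi> x) \<partial>M) = (\<Sum>y\<in>F. G y * emeasure M {x. \<phi> x = y})"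
proof -
  have eq: "G (\<phi> x) = (\<Sum>y\<in>F. G y * indicator {x. \<phi> x = y} x)" for x
  proof -
    have "(\<Sum>y\<in>F. G y * indicator {x. \<phi> x = y} x) = G (\<phi> x) + (\<Sum>y\<in>F-{\<phi> x}. G y * indicator {x. \<phi> x = y} x)"
      using sum.remove[OF finF rng, of "\<lambda>y. G y * indicator {x'. \<phi> x' = y} x" x] by simp
    also have "(\<Sum>y\<in>F-{\<phi> x}. G y * indicator {x. \<phi> x = y} x) = 0"
      by (rule sum.neutral) (auto simp: indicator_def)
    finally show ?thesis by simp
  qed
  have "(\<integral>\<^sup>+x. G (\<phi> x) \<partial>M) = (\<integral>\<^sup>+x. (\<Sum>y\<in>F. G y * indicator {x. \<phi> x = y} x) \<partial>M)"
    by (simp add: eq)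
  also have "\<dots> = (\<Sum>y\<in>F. (\<integral>\<^sup>+x. G y * indicator {x. \<phi> x = y} x \<partial>M))"
    by (rule nn_integral_sum) (use fib sp in auto)
  also have "\<dots> = (\<Sum>y\<in>F. G y * emeasure M {x. \<phi> x = y})"
    by (rule sum.cong[OF refl]) (use fib in \<open>simp add: nn_integral_cmult_indicator\<close>)
  finally show ?thesis .
qed

lemma bern_nn:
  assumes "0 \<le> q" "q \<le> 1"
  shows "(\<integral>\<^sup>+b. u b \<partial>measure_pmf (bernoulli_pmf q)) = u True * ennreal q + u False * ennreal (1 - q)"
proof -
  have "(\<integral>\<^sup>+b. u b \<partial>measure_pmf (bernoulli_pmf q)) = (\<Sum>b\<in>UNIV. u b * ennreal (pmf (bernoulli_pmf q) b))"
    by (rule nn_integral_measure_pmf_support) auto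
  also have "\<dots> = u True * ennreal q + u False * ennreal (1 - q)"
    using assms by (simp add: UNIV_bool)
  finally show ?thesis .
qed

end

lemma snd_borel: "snd \<in> (borel :: ('a::topological_space \<times> 'b::topological_space) measure) \<rightarrow>\<^sub>M borel"
  by (rule cont_meas) (intro continuous_on_snd continuous_on_id)

lemma fst_borel: "fst \<in> (borel :: ('a::topological_space \<times> 'b::topological_space) measure) \<rightarrow>\<^sub>M borel"
  by (rule cont_meas) (intro continuous_on_fst continuous_on_id)

locale upper = dyn +
  fixes n :: nat and e :: real and ys :: "'a list" and m :: nat
  assumes n_pos: "0 < n" and e_pos: "0 < e" and ys_ne: "ys \<noteq> []"
    and span: "\<And>x. \<exists>y\<in>set ys. bd n x y \<le> e" and m_pos: "0 < m"
begin

definition "d = hd ys"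
definition "phi x = sel n e d ys x"
definition "pw \<mu> y = measure \<mu> {x. phi x = y}"
definition "kw \<mu> y = nat \<lfloor>real m * pw \<mu> y\<rfloor>"
definition "qw \<mu> y = real (kw \<mu> y) / real m"
definition "rw \<mu> y = (if pw \<mu> y = 0 then 0 else qw \<mu> y / pw \<mu> y)"
definition "Kx \<mu> x = distr (measure_pmf (bernoulli_pmf (rw \<mu> (phi x)))) borel (\<lambda>b. (x, if b then phi x else d))"
definition "piM \<mu> = \<mu> \<bind> Kx \<mu>"
definition "nuM \<mu> = distr (piM \<mu>) borel snd"

lemma d_in: "d \<in> set ys" unfolding d_def using ys_ne by simp

lemma phi_in: "phi x \<in> set ys" and phi_close: "bd n x (phi x) \<le> e"
  unfolding phi_def using sel_close[OF span[of x]] by auto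

lemma phi_fiber: "{x. phi x = y} \<in> sets borel"
  unfolding phi_def by (rule sel_fiber[OF n_pos])

lemma prob_sets: "\<mu> \<in> prob_measures \<Longrightarrow> prob_space \<mu> \<and> sets \<mu> = sets borel \<and> space \<mu> = UNIV"
  using prob_measuresD[of \<mu>] sets_eq_imp_space_eq[of \<mu> borel] by auto

lemma pw_nonneg: "0 \<le> pw \<mu> y" unfolding pw_def by simp

lemma pw_le1: "\<mu> \<in> prob_measures \<Longrightarrow> pw \<mu> y \<le> 1"
  unfolding pw_def using prob_sets prob_space.prob_le_1 by blast

lemma sum_pw: 
  assumes mu: "\<mu> \<in> prob_measures"
  shows "(\<Sum>y\<in>set ys. pw \<mu> y) = 1"
proof -
  have P: "prob_space \<mu>" "sets \<mu> = sets borel" "space \<mu> = UNIV" using prob_sets[OF mu] by auto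
  interpret prob_space \<mu> by (rule P(1))
  have fib: "{x. phi x = y} \<in> sets \<mu>" for y using phi_fiber P(2) by simp
  have "(\<integral>\<^sup>+x. (\<lambda>y. 1::ennreal) (phi x) \<partial>\<mu>) = (\<Sum>y\<in>set ys. 1 * emeasure \<mu> {x. phi x = y})"
    by (rule nn_integral_fiber[OF _ phi_in fib P(3)]) simp
  moreover have "(\<integral>\<^sup>+x. (\<lambda>y. 1::ennreal) (phi x) \<partial>\<mu>) = 1" using emeasure_space_1 P(3) by simp
  moreover have "(\<Sum>y\<in>set ys. 1 * emeasure \<mu> {x. phi x = y}) = ennreal (\<Sum>y\<in>set ys. pw \<mu> y)"
    unfolding pw_def by (simp add: emeasure_eq_measure sum_ennreal)
  ultimately have "ennreal (\<Sum>y\<in>set ys. pw \<mu> y) = 1" by simp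
  then show ?thesis by (simp add: ennreal_eq_1 sum_nonneg pw_nonneg)
qed

lemma kw_le: "\<mu> \<in> prob_measures \<Longrightarrow> kw \<mu> y \<le> m"
proof -
  assume mu: "\<mu> \<in> prob_measures"
  have "real m * pw \<mu> y \<le> real m" using pw_le1[OF mu] pw_nonneg[of \<mu> y] by (simp add: mult_left_le)
  then have "\<lfloor>real m * pw \<mu> y\<rfloor> \<le> int m" by (metis floor_mono floor_of_nat)
  then show ?thesis unfolding kw_def by simp
qed

lemma qw_nonneg: "0 \<le> qw \<mu> y" unfolding qw_def by simp

lemma qw_le: "qw \<mu> y \<le> pw \<mu> y"
proof -
  have "real (kw \<mu> y) \<le> real m * pw \<mu> y"
    unfolding kw_def using pw_nonneg[of \<mu> y] by (simp add: of_nat_nat)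
  then show ?thesis unfolding qw_def using m_pos by (simp add: divide_le_eq mult.commute)
qed

lemma pw_qw: "pw \<mu> y - qw \<mu> y \<le> 1 / real m"
proof -
  have "real m * pw \<mu> y < real (kw \<mu> y) + 1"
    unfolding kw_def using pw_nonneg[of \<mu> y] by (simp add: of_nat_nat)
  then have "pw \<mu> y < (real (kw \<mu> y) + 1) / real m" using m_pos by (simp add: less_divide_eq mult.commute)
  then show ?thesis unfolding qw_def by (simp add: add_divide_distrib)
qed

lemma rw_bounds: "0 \<le> rw \<mu> y" "rw \<mu> y \<le> 1"
  unfolding rw_def using qw_le[of \<mu> y] qw_nonneg[of \<mu> y] pw_nonneg[of \<mu> y]
  by (auto simp: divide_le_eq)

lemma rw_pw: "rw \<mu> y * pw \<mu> y = qw \<mu> y"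
proof (cases "pw \<mu> y = 0")
  case True
  then have "qw \<mu> y = 0" using qw_le[of \<mu> y] qw_nonneg[of \<mu> y] by simp
  then show ?thesis using True unfolding rw_def by simp
qed (simp add: rw_def)

lemma rw_pw': "(1 - rw \<mu> y) * pw \<mu> y = pw \<mu> y - qw \<mu> y"
  using rw_pw[of \<mu> y] by (simp add: algebra_simps)


lemma Kx_sets[simp]: "sets (Kx \<mu> x) = sets borel" unfolding Kx_def by simp

lemma Kx_prob: "prob_space (Kx \<mu> x)"
  unfolding Kx_def by (rule measure_pmf.prob_space_distr) (simp add: measurable_pmf_measure1)

lemma Kx_nn:
  assumes h: "h \<in> borel_measurable (borel :: ('a \<times> 'a) measure)"
  shows "(\<integral>\<^sup>+z. h z \<partial>Kx \<mu> x) = h (x, phi x) * ennreal (rw \<mu> (phi x)) + h (x, d) * ennreal (1 - rw \<mu> (phi x))"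
proof -
  have "(\<integral>\<^sup>+z. h z \<partial>Kx \<mu> x) = (\<integral>\<^sup>+b. h (x, if b then phi x else d) \<partial>measure_pmf (bernoulli_pmf (rw \<mu> (phi x))))"
    unfolding Kx_def by (rule nn_integral_distr) (use h in \<open>auto simp: measurable_pmf_measure1\<close>)
  also have "\<dots> = h (x, phi x) * ennreal (rw \<mu> (phi x)) + h (x, d) * ennreal (1 - rw \<mu> (phi x))"
    using bern_nn[OF rw_bounds(1)[of \<mu> "phi x"] rw_bounds(2)[of \<mu> "phi x"], where u="\<lambda>b. h (x, if b then phi x else d)"] by simp
  finally show ?thesis .
qed

lemma Kx_emeasure:
  assumes A: "A \<in> sets (borel :: ('a \<times> 'a) measure)"
  shows "emeasure (Kx \<mu> x) A = indicator A (x, phi x) * ennreal (rw \<mu> (phi x)) + indicator A (x, d) * ennreal (1 - rw \<mu> (phi x))"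
proof -
  have "emeasure (Kx \<mu> x) A = (\<integral>\<^sup>+z. indicator A z \<partial>Kx \<mu> x)"
    using A by (simp add: nn_integral_indicator)
  also have "\<dots> = indicator A (x, phi x) * ennreal (rw \<mu> (phi x)) + indicator A (x, d) * ennreal (1 - rw \<mu> (phi x))"
    by (rule Kx_nn) (use A in simp)
  finally show ?thesis .
qed

lemma phi_pair_meas: "(\<lambda>x. (x, phi x)) \<in> borel \<rightarrow>\<^sub>M borel"
  unfolding phi_def by (rule sel_meas_pair[OF n_pos])

lemma phi_comp_meas: "(\<lambda>x. h (phi x)) \<in> borel \<rightarrow>\<^sub>M (borel :: 'b::topological_space measure)"
  unfolding phi_def by (rule sel_meas_const[OF n_pos]) simp

lemma pair_d_meas: "(\<lambda>x. (x, d)) \<in> borel \<rightarrow>\<^sub>M borel"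
  by (rule cont_meas) (auto intro: continuous_intros)

lemma Kx_meas_borel: "Kx \<mu> \<in> borel \<rightarrow>\<^sub>M subprob_algebra borel"
proof (rule measurable_subprob_algebra)
  fix x show "subprob_space (Kx \<mu> x)" using Kx_prob by (rule prob_space_imp_subprob_space)
  show "sets (Kx \<mu> x) = sets borel" by simp
next
  fix A :: "('a \<times> 'a) set" assume A: "A \<in> sets borel"
  have m1: "(\<lambda>x. indicator A (x, phi x) :: ennreal) \<in> borel_measurable borel"
    using measurable_compose[OF phi_pair_meas borel_measurable_indicator[OF A]] by simp
  have m2: "(\<lambda>x. indicator A (x, d) :: ennreal) \<in> borel_measurable borel"
    using measurable_compose[OF pair_d_meas borel_measurable_indicator[OF A]] by simp
  have m3: "(\<lambda>x. ennreal (rw \<mu> (phi x))) \<in> borel_measurable borel" by (rule phi_comp_meas)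
  have m4: "(\<lambda>x. ennreal (1 - rw \<mu> (phi x))) \<in> borel_measurable borel" by (rule phi_comp_meas)
  have "(\<lambda>x. indicator A (x, phi x) * ennreal (rw \<mu> (phi x)) + indicator A (x, d) * ennreal (1 - rw \<mu> (phi x))) \<in> borel_measurable borel"
    using m1 m2 m3 m4 by measurable
  then show "(\<lambda>x. emeasure (Kx \<mu> x) A) \<in> borel_measurable borel"
    by (simp add: Kx_emeasure[OF A])
qed

lemma Kx_meas: "\<mu> \<in> prob_measures \<Longrightarrow> Kx \<mu> \<in> \<mu> \<rightarrow>\<^sub>M subprob_algebra borel"
  using meas_cong_borel[of \<mu> "Kx \<mu>"] Kx_meas_borel prob_sets by blast

lemma piM_sets: "\<mu> \<in> prob_measures \<Longrightarrow> sets (piM \<mu>) = sets borel"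
  unfolding piM_def by (rule sets_bind) (use prob_sets in auto)

lemma piM_prob: "\<mu> \<in> prob_measures \<Longrightarrow> prob_space (piM \<mu>)"
  unfolding piM_def using prob_sets Kx_meas Kx_prob
  by (intro prob_space.prob_space_bind) auto

lemma piM_fst: assumes mu: "\<mu> \<in> prob_measures" shows "distr (piM \<mu>) borel fst = \<mu>"
proof -
  have fstm: "fst \<in> (borel :: ('a\<times>'a) measure) \<rightarrow>\<^sub>M borel"
    by (rule cont_meas) (auto intro: continuous_intros)
  have "distr (piM \<mu>) borel fst = \<mu> \<bind> (\<lambda>x. distr (Kx \<mu> x) borel fst)"
    unfolding piM_def by (rule distr_bind[OF Kx_meas[OF mu] _ fstm]) (use prob_sets[OF mu] in auto)
  also have "\<dots> = \<mu> \<bind> return borel"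
  proof (rule bind_cong[OF refl])
    fix x
    have "distr (Kx \<mu> x) borel fst = distr (measure_pmf (bernoulli_pmf (rw \<mu> (phi x)))) borel (\<lambda>b. x)"
      unfolding Kx_def using distr_distr[OF fstm, of "\<lambda>b. (x, if b then phi x else d)" "measure_pmf (bernoulli_pmf (rw \<mu> (phi x)))"]
      by (simp add: measurable_pmf_measure1 o_def)
    also have "\<dots> = return borel x" by (rule measure_pmf.distr_const) simp
    finally show "distr (Kx \<mu> x) borel fst = return borel x" .
  qed
  also have "\<dots> = \<mu>" by (rule bind_return'') (use prob_sets[OF mu] in auto)
  finally show ?thesis .
qed

lemma piM_coupling: "\<mu> \<in> prob_measures \<Longrightarrow> piM \<mu> \<in> couplings \<mu> (nuM \<mu>)"
  unfolding couplings_def nuM_def using piM_sets piM_prob piM_fst by auto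

lemma nuM_prob: assumes mu: "\<mu> \<in> prob_measures" shows "nuM \<mu> \<in> prob_measures"
proof -
  have sndm: "snd \<in> piM \<mu> \<rightarrow>\<^sub>M borel"
    by (rule meas_cong_borel[OF piM_sets[OF mu]], rule cont_meas) (auto intro: continuous_intros)
  show ?thesis unfolding prob_measures_def nuM_def
    using prob_space.prob_space_distr[OF piM_prob[OF mu] sndm] by simp
qed


lemma enn_aux:
  fixes a b r p :: real
  assumes "0 \<le> a" "0 \<le> b" "0 \<le> r" "r \<le> 1" "0 \<le> p"
  shows "(ennreal a * ennreal r + ennreal b * ennreal (1 - r)) * ennreal p = ennreal (a * (r * p) + b * ((1 - r) * p))"
proof -
  have "ennreal a * ennreal r = ennreal (a * r)" using assms by (simp add: ennreal_mult)
  moreover have "ennreal b * ennreal (1 - r) = ennreal (b * (1 - r))" using assms by (simp add: ennreal_mult)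
  moreover have "ennreal (a * r) + ennreal (b * (1 - r)) = ennreal (a * r + b * (1 - r))"
    using assms by (simp add: ennreal_plus)
  moreover have "ennreal (a * r + b * (1 - r)) * ennreal p = ennreal ((a * r + b * (1 - r)) * p)"
    using assms by (simp add: ennreal_mult)
  moreover have "(a * r + b * (1 - r)) * p = a * (r * p) + b * ((1 - r) * p)" by (simp add: algebra_simps)
  ultimately show ?thesis by simp
qed

lemma ind_enn: "(indicator A y :: ennreal) = ennreal (indicator A y)"
  by (simp add: indicator_def)

definition "Phi \<kappa> A = (\<Sum>y\<in>set ys. indicator A y * (real (\<kappa> y) / real m)) + indicator A d * (1 - (\<Sum>y\<in>set ys. real (\<kappa> y) / real m))"

lemma int_phi:
  assumes mu: "\<mu> \<in> prob_measures"
  shows "(\<integral>\<^sup>+x. G (phi x) \<partial>\<mu>) = (\<Sum>y\<in>set ys. G y * ennreal (pw \<mu> y))"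
proof -
  have P: "prob_space \<mu>" "sets \<mu> = sets borel" "space \<mu> = UNIV" using prob_sets[OF mu] by auto
  have fib: "{x. phi x = y} \<in> sets \<mu>" for y using phi_fiber P(2) by simp
  have "(\<integral>\<^sup>+x. G (phi x) \<partial>\<mu>) = (\<Sum>y\<in>set ys. G y * emeasure \<mu> {x. phi x = y})"
    by (rule nn_integral_fiber[OF _ phi_in fib P(3)]) simp
  also have "\<dots> = (\<Sum>y\<in>set ys. G y * ennreal (pw \<mu> y))"
  proof -
    interpret prob_space \<mu> by (rule P(1))
    show ?thesis unfolding pw_def by (simp add: emeasure_eq_measure)
  qed
  finally show ?thesis .
qed

lemma nuM_emeasure:
  assumes mu: "\<mu> \<in> prob_measures" and A: "A \<in> sets borel"
  shows "emeasure (nuM \<mu>) A = ennreal (Phi (kw \<mu>) A)"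
proof -
  have P: "prob_space \<mu>" "sets \<mu> = sets borel" "space \<mu> = UNIV" using prob_sets[OF mu] by auto
  have sndm: "snd \<in> piM \<mu> \<rightarrow>\<^sub>M borel"
    by (rule meas_cong_borel[OF piM_sets[OF mu] snd_borel])
  have sndb: "snd \<in> (borel :: ('a \<times> 'a) measure) \<rightarrow>\<^sub>M borel" by (rule snd_borel)
  have spi: "space (piM \<mu>) = UNIV" using sets_eq_imp_space_eq[OF piM_sets[OF mu]] by simp
  have sA: "snd -` A \<in> sets (borel :: ('a \<times> 'a) measure)"
    using measurable_sets[OF sndb A] by simp
  let ?G = "\<lambda>y. indicator A y * ennreal (rw \<mu> y) + indicator A d * ennreal (1 - rw \<mu> y)"
  have "emeasure (nuM \<mu>) A = emeasure (piM \<mu>) (snd -` A)"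
    unfolding nuM_def using emeasure_distr[OF sndm A] spi by simp
  also have "\<dots> = (\<integral>\<^sup>+x. emeasure (Kx \<mu> x) (snd -` A) \<partial>\<mu>)"
    unfolding piM_def by (rule emeasure_bind[OF _ Kx_meas[OF mu] sA]) (use P in simp)
  also have "\<dots> = (\<integral>\<^sup>+x. ?G (phi x) \<partial>\<mu>)"
    by (rule nn_integral_cong) (simp add: Kx_emeasure[OF sA] indicator_def)
  also have "\<dots> = (\<Sum>y\<in>set ys. ?G y * ennreal (pw \<mu> y))" by (rule int_phi[OF mu])
  also have "\<dots> = (\<Sum>y\<in>set ys. ennreal (indicator A y * qw \<mu> y + indicator A d * (pw \<mu> y - qw \<mu> y)))"
  proof (rule sum.cong[OF refl])
    fix y
    have r: "0 \<le> rw \<mu> y" "0 \<le> 1 - rw \<mu> y" using rw_bounds[of \<mu> y] by auto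
    have "?G y * ennreal (pw \<mu> y) = ennreal (indicator A y * (rw \<mu> y * pw \<mu> y) + indicator A d * ((1 - rw \<mu> y) * pw \<mu> y))"
      unfolding ind_enn[of A] by (rule enn_aux) (use rw_bounds[of \<mu> y] pw_nonneg[of \<mu> y] in auto)
    also have "\<dots> = ennreal (indicator A y * qw \<mu> y + indicator A d * (pw \<mu> y - qw \<mu> y))"
      by (simp only: rw_pw rw_pw')
    finally show "?G y * ennreal (pw \<mu> y) = ennreal (indicator A y * qw \<mu> y + indicator A d * (pw \<mu> y - qw \<mu> y))" .
  qed
  also have "\<dots> = ennreal (\<Sum>y\<in>set ys. indicator A y * qw \<mu> y + indicator A d * (pw \<mu> y - qw \<mu> y))"
    by (rule sum_ennreal) (use qw_nonneg qw_le in \<open>auto simp: indicator_def\<close>)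
  also have "(\<Sum>y\<in>set ys. indicator A y * qw \<mu> y + indicator A d * (pw \<mu> y - qw \<mu> y)) = Phi (kw \<mu>) A"
    unfolding Phi_def qw_def using sum_pw[OF mu]
    by (simp add: sum.distrib sum_subtractf sum_distrib_left[symmetric] sum_divide_distrib)
  finally show ?thesis .
qed

lemma nuM_eq:
  assumes mu: "\<mu> \<in> prob_measures" and mu': "\<mu>' \<in> prob_measures" and k: "\<forall>y\<in>set ys. kw \<mu> y = kw \<mu>' y"
  shows "nuM \<mu> = nuM \<mu>'"
proof (rule measure_eqI)
  show "sets (nuM \<mu>) = sets (nuM \<mu>')" unfolding nuM_def by simp
  fix A assume "A \<in> sets (nuM \<mu>)"
  then have A: "A \<in> sets borel" unfolding nuM_def by simp
  have "Phi (kw \<mu>) A = Phi (kw \<mu>') A" unfolding Phi_def using k by simp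
  then show "emeasure (nuM \<mu>) A = emeasure (nuM \<mu>') A"
    using nuM_emeasure[OF mu A] nuM_emeasure[OF mu' A] by simp
qed

lemma cost_bound:
  assumes mu: "\<mu> \<in> prob_measures"
  shows "integral\<^sup>L (piM \<mu>) (\<lambda>z. bd n (fst z) (snd z)) \<le> e + D * real (card (set ys)) / real m"
proof -
  have P: "prob_space \<mu>" "sets \<mu> = sets borel" "space \<mu> = UNIV" using prob_sets[OF mu] by auto
  have bm: "(\<lambda>z. bd n (fst z) (snd z)) \<in> borel \<rightarrow>\<^sub>M borel" by (rule bd_meas[OF n_pos])
  have bmE: "(\<lambda>z. ennreal (bd n (fst z) (snd z))) \<in> borel \<rightarrow>\<^sub>M borel" using bm by measurable
  let ?c = "e + D * real (card (set ys)) / real m"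
  have "(\<integral>\<^sup>+z. ennreal (bd n (fst z) (snd z)) \<partial>piM \<mu>) = (\<integral>\<^sup>+x. (\<integral>\<^sup>+z. ennreal (bd n (fst z) (snd z)) \<partial>Kx \<mu> x) \<partial>\<mu>)"
    unfolding piM_def by (rule nn_integral_bind[OF _ Kx_meas[OF mu]]) (use bmE in simp)
  also have "\<dots> = (\<integral>\<^sup>+x. ennreal (bd n x (phi x)) * ennreal (rw \<mu> (phi x)) + ennreal (bd n x d) * ennreal (1 - rw \<mu> (phi x)) \<partial>\<mu>)"
    by (rule nn_integral_cong) (simp add: Kx_nn[OF bmE])
  also have "\<dots> \<le> (\<integral>\<^sup>+x. (\<lambda>y. ennreal (e + D * (1 - rw \<mu> y))) (phi x) \<partial>\<mu>)"
  proof (rule nn_integral_mono)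
    fix x
    have r: "0 \<le> rw \<mu> (phi x)" "rw \<mu> (phi x) \<le> 1" using rw_bounds by auto
    have b1: "bd n x (phi x) * rw \<mu> (phi x) \<le> e"
      using mult_mono[OF phi_close[of x] r(2) less_imp_le[OF e_pos] r(1)] by simp
    have b2: "bd n x d * (1 - rw \<mu> (phi x)) \<le> D * (1 - rw \<mu> (phi x))"
      by (rule mult_right_mono[OF bd_le_D[OF n_pos]]) (use r in simp)
    have "ennreal (bd n x (phi x)) * ennreal (rw \<mu> (phi x)) + ennreal (bd n x d) * ennreal (1 - rw \<mu> (phi x))
        = ennreal (bd n x (phi x) * rw \<mu> (phi x) + bd n x d * (1 - rw \<mu> (phi x)))"
      using enn_aux[of "bd n x (phi x)" "bd n x d" "rw \<mu> (phi x)" 1] r bd_nonneg[OF n_pos] by simp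
    also have "\<dots> \<le> ennreal (e + D * (1 - rw \<mu> (phi x)))"
      using b1 b2 by (intro ennreal_leI) simp
    finally show "ennreal (bd n x (phi x)) * ennreal (rw \<mu> (phi x)) + ennreal (bd n x d) * ennreal (1 - rw \<mu> (phi x))
        \<le> ennreal (e + D * (1 - rw \<mu> (phi x)))" .
  qed
  also have "\<dots> = (\<Sum>y\<in>set ys. ennreal (e + D * (1 - rw \<mu> y)) * ennreal (pw \<mu> y))" by (rule int_phi[OF mu])
  also have "\<dots> = ennreal (\<Sum>y\<in>set ys. e * pw \<mu> y + D * (pw \<mu> y - qw \<mu> y))"
  proof -
    have "(\<Sum>y\<in>set ys. ennreal (e + D * (1 - rw \<mu> y)) * ennreal (pw \<mu> y)) = (\<Sum>y\<in>set ys. ennreal (e * pw \<mu> y + D * (pw \<mu> y - qw \<mu> y)))"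
    proof (rule sum.cong[OF refl])
      fix y
      have "0 \<le> e + D * (1 - rw \<mu> y)" using e_pos D_pos rw_bounds[of \<mu> y] by simp
      then have "ennreal (e + D * (1 - rw \<mu> y)) * ennreal (pw \<mu> y) = ennreal ((e + D * (1 - rw \<mu> y)) * pw \<mu> y)"
        using pw_nonneg[of \<mu> y] by (simp add: ennreal_mult'[symmetric])
      also have "(e + D * (1 - rw \<mu> y)) * pw \<mu> y = e * pw \<mu> y + D * (pw \<mu> y - qw \<mu> y)"
        using rw_pw'[of \<mu> y] by (simp add: algebra_simps)
      finally show "ennreal (e + D * (1 - rw \<mu> y)) * ennreal (pw \<mu> y) = ennreal (e * pw \<mu> y + D * (pw \<mu> y - qw \<mu> y))" .
    qed
    also have "\<dots> = ennreal (\<Sum>y\<in>set ys. e * pw \<mu> y + D * (pw \<mu> y - qw \<mu> y))"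
      by (rule sum_ennreal) (use e_pos D_pos pw_nonneg qw_le in \<open>auto intro!: add_nonneg_nonneg mult_nonneg_nonneg\<close>)
    finally show ?thesis .
  qed
  also have "\<dots> \<le> ennreal ?c"
  proof (rule ennreal_leI)
    have "(\<Sum>y\<in>set ys. e * pw \<mu> y + D * (pw \<mu> y - qw \<mu> y)) = e * (\<Sum>y\<in>set ys. pw \<mu> y) + D * (\<Sum>y\<in>set ys. pw \<mu> y - qw \<mu> y)"
      by (simp add: sum.distrib sum_distrib_left)
    also have "\<dots> \<le> e * 1 + D * (\<Sum>y\<in>set ys. 1 / real m)"
      using sum_pw[OF mu] D_pos e_pos by (intro add_mono mult_left_mono sum_mono pw_qw) auto
    finally show "(\<Sum>y\<in>set ys. e * pw \<mu> y + D * (pw \<mu> y - qw \<mu> y)) \<le> ?c" by simp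
  qed
  finally have le: "(\<integral>\<^sup>+z. ennreal (bd n (fst z) (snd z)) \<partial>piM \<mu>) \<le> ennreal ?c" .
  have "integral\<^sup>L (piM \<mu>) (\<lambda>z. bd n (fst z) (snd z)) = enn2real (\<integral>\<^sup>+z. ennreal (bd n (fst z) (snd z)) \<partial>piM \<mu>)"
    by (rule integral_eq_nn_integral) (use meas_cong_borel[OF piM_sets[OF mu] bm] bd_nonneg[OF n_pos] in auto)
  also have "\<dots> \<le> enn2real (ennreal ?c)" by (rule enn2real_mono[OF le]) simp
  also have "\<dots> = ?c" using e_pos D_pos by (intro enn2real_ennreal) simp
  finally show ?thesis .
qed

end

context dyn begin

definition "covers n eps E \<longleftrightarrow> finite E \<and> E \<subseteq> prob_measures \<and> (\<forall>\<mu>\<in>prob_measures. \<exists>\<nu>\<in>E. wasserstein_n f n \<mu> \<nu> \<le> eps)"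

lemma cover_number_eq: "cover_number_M f prob_measures n eps = Inf {card E | E. covers n eps E}"
  unfolding cover_number_M_def covers_def by simp

lemma covers_mono: "covers n eps E \<Longrightarrow> eps \<le> eps' \<Longrightarrow> covers n eps' E"
  unfolding covers_def by (meson order_trans)

lemma cover_number_le: "covers n eps E \<Longrightarrow> cover_number_M f prob_measures n eps \<le> card E"
  unfolding cover_number_eq by (rule cInf_lower) auto

lemma cover_number_attained: "covers n eps E \<Longrightarrow> \<exists>E'. covers n eps E' \<and> card E' = cover_number_M f prob_measures n eps"
proof -
  assume "covers n eps E"
  then have ne: "{card E | E. covers n eps E} \<noteq> {}" by auto
  show ?thesis using Inf_nat_def1[OF ne] unfolding cover_number_eq by auto
qed

lemma upper_cover:
  assumes n: "0 < n" and e: "0 < e" and m: "0 < m"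
  shows "\<exists>E. covers n (e + D * real (spanning_number f n e) / real m) E \<and> card E \<le> (m + 1) ^ spanning_number f n e"
proof -
  obtain F where F: "spanning n e F" "card F = spanning_number f n e"
    using spanning_number_attained[OF n e] by blast
  have finF: "finite F" using F(1) spanning_def by auto
  obtain ys where ys: "set ys = F" "distinct ys" using finite_distinct_list[OF finF] by blast
  have Fne: "F \<noteq> {}" using F(1) unfolding spanning_def by auto
  have ysne: "ys \<noteq> []" using ys Fne by auto
  have sp: "\<And>x. \<exists>y\<in>set ys. bd n x y \<le> e" using F(1) ys unfolding spanning_def by auto
  interpret U: upper f n e ys m
    by (unfold_locales) (use n e ysne sp m in auto)
  let ?P = "prob_measures :: 'a measure set"
  define kf where "kf \<mu> = restrict (U.kw \<mu>) (set ys)" for \<mu>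
  define \<Psi> where "\<Psi> \<kappa> = U.nuM (SOME \<mu>. \<mu> \<in> ?P \<and> kf \<mu> = \<kappa>)" for \<kappa>
  let ?E = "U.nuM ` ?P"
  have nuPsi: "U.nuM \<mu> = \<Psi> (kf \<mu>)" if mu: "\<mu> \<in> ?P" for \<mu>
  proof -
    have ex: "\<exists>\<mu>'. \<mu>' \<in> ?P \<and> kf \<mu>' = kf \<mu>" using mu by blast
    define \<mu>' where "\<mu>' = (SOME \<mu>'. \<mu>' \<in> ?P \<and> kf \<mu>' = kf \<mu>)"
    have \<mu>': "\<mu>' \<in> ?P" "kf \<mu>' = kf \<mu>" using someI_ex[OF ex] unfolding \<mu>'_def by auto
    have "\<forall>y\<in>set ys. U.kw \<mu> y = U.kw \<mu>' y"
      using \<mu>'(2) unfolding kf_def by (metis restrict_apply')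
    then have "U.nuM \<mu> = U.nuM \<mu>'" by (rule U.nuM_eq[OF mu \<mu>'(1)])
    then show ?thesis unfolding \<Psi>_def \<mu>'_def by simp
  qed
  have kfin: "kf \<mu> \<in> (set ys \<rightarrow>\<^sub>E {0..m})" if "\<mu> \<in> ?P" for \<mu>
    using U.kw_le[OF that] unfolding kf_def by auto
  have Esub: "?E \<subseteq> \<Psi> ` (set ys \<rightarrow>\<^sub>E {0..m})"
    using nuPsi kfin by blast
  have finPi: "finite (set ys \<rightarrow>\<^sub>E {0..m})" by (rule finite_PiE) auto
  have cardPi: "card (set ys \<rightarrow>\<^sub>E {0..m}) = (m + 1) ^ spanning_number f n e"
    using card_PiE[of "set ys" "\<lambda>_. {0..m}"] ys F(2) finF by simp
  have finE: "finite ?E" using finite_subset[OF Esub] finPi by blast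
  have cardE: "card ?E \<le> (m + 1) ^ spanning_number f n e"
    using card_mono[OF finite_imageI[OF finPi] Esub] card_image_le[OF finPi, of \<Psi>] cardPi by linarith
  have cov: "\<forall>\<mu>\<in>?P. \<exists>\<nu>\<in>?E. wasserstein_n f n \<mu> \<nu> \<le> e + D * real (spanning_number f n e) / real m"
  proof
    fix \<mu> assume mu: "\<mu> \<in> ?P"
    have "wasserstein_n f n \<mu> (U.nuM \<mu>) \<le> integral\<^sup>L (U.piM \<mu>) (\<lambda>z. bd n (fst z) (snd z))"
      by (rule W_le[OF U.piM_coupling[OF mu] n])
    also have "\<dots> \<le> e + D * real (card (set ys)) / real m" by (rule U.cost_bound[OF mu])
    finally show "\<exists>\<nu>\<in>?E. wasserstein_n f n \<mu> \<nu> \<le> e + D * real (spanning_number f n e) / real m"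
      using mu ys F(2) by auto
  qed
  have "?E \<subseteq> ?P" using U.nuM_prob by blast
  then show ?thesis using finE cardE cov unfolding covers_def by blast
qed

lemma covers_exist: "0 < n \<Longrightarrow> 0 < eps \<Longrightarrow> \<exists>E. covers n eps E"
proof -
  assume n: "0 < n" and eps: "0 < eps"
  define e where "e = eps / 2"
  have e: "0 < e" using eps e_def by simp
  define K where "K = spanning_number f n e"
  define m where "m = nat \<lceil>D * real K / e\<rceil> + 1"
  have m: "0 < m" unfolding m_def by simp
  have "D * real K / e \<le> real m" unfolding m_def by linarith
  then have "D * real K \<le> e * real m" using e by (simp add: divide_le_eq mult.commute)
  then have "D * real K / real m \<le> e" using m by (simp add: divide_le_eq mult.commute)
  then have le: "e + D * real K / real m \<le> eps" unfolding e_def by linarith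
  obtain E where "covers n (e + D * real K / real m) E" using upper_cover[OF n e m] unfolding K_def by blast
  then show ?thesis using covers_mono[OF _ le] by blast
qed

end

lemma ln_bound:
  fixes a x \<theta> :: real
  assumes a: "1 \<le> a" and t: "0 < \<theta>" "\<theta> \<le> 1" and x: "0 \<le> x"
  shows "ln (a + x) \<le> ln (a / \<theta>) + \<theta> * x"
proof -
  have pos: "0 < \<theta> * (a + x) / a" using a t x by simp
  have "ln (a + x) - ln (a / \<theta>) = ln (\<theta> * (a + x) / a)"
    using a t x by (simp add: ln_div ln_mult)
  also have "\<dots> \<le> \<theta> * (a + x) / a - 1" by (rule ln_le_minus_one[OF pos])
  also have "\<dots> = \<theta> - 1 + \<theta> * x / a" using a by (simp add: field_simps)
  also have "\<dots> \<le> \<theta> * x / a" using t by simp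
  also have "\<dots> \<le> \<theta> * x / 1" by (rule divide_left_mono) (use a t x in auto)
  finally show ?thesis by simp
qed

context dyn begin

abbreviation "SN n e \<equiv> spanning_number f n e"
abbreviation "NM n e \<equiv> cover_number_M f prob_measures n e"

lemma lower_pt:
  assumes n: "0 < n" and r: "0 < r"
  shows "ln (real (SN n (4*r))) - 3 \<le> lg (lg (real (NM n (r/16))))"
proof -
  obtain E where "covers n (r/16) E" using covers_exist[OF n] r by fastforce
  then obtain E' where E': "covers n (r/16) E'" "card E' = NM n (r/16)"
    using cover_number_attained by blast
  have "ln (real (SN n (4*r))) - 3 \<le> lg (lg (real (card E')))"
    by (rule lower_bound[OF n r]) (use E'(1) in \<open>simp_all add: covers_def\<close>)
  then show ?thesis using E'(2) by simp
qed

lemma upper_pt: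
  assumes n: "0 < n" and e: "0 < e" and t: "0 < \<theta>" "\<theta> \<le> 1"
  shows "lg (lg (real (NM n (2*e)))) \<le> (1 + \<theta>) * ln (real (SN n e)) + ln (max 1 (ln (D/e + 3)) / \<theta>)"
proof -
  define K where "K = SN n e"
  have K1: "1 \<le> K" unfolding K_def by (rule spanning_number_pos[OF n e])
  define m where "m = nat \<lceil>D * real K / e\<rceil> + 1"
  have m: "0 < m" unfolding m_def by simp
  have mb: "D * real K / e \<le> real m" unfolding m_def by linarith
  then have "D * real K \<le> e * real m" using e by (simp add: divide_le_eq mult.commute)
  then have "D * real K / real m \<le> e" using m by (simp add: divide_le_eq mult.commute)
  then have le: "e + D * real K / real m \<le> 2*e" by linarith
  obtain E where E: "covers n (e + D * real K / real m) E" "card E \<le> (m + 1) ^ K"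
    using upper_cover[OF n e m] unfolding K_def by blast
  have NE: "NM n (2*e) \<le> (m + 1) ^ K" using cover_number_le[OF covers_mono[OF E(1) le]] E(2) by linarith
  define c where "c = D/e + 3"
  have c3: "3 \<le> c" unfolding c_def using D_pos e by simp
  have m1: "real (m + 1) \<le> c * real K"
  proof -
    have cpos: "0 \<le> D * real K / e" using D_pos e by simp
    have "real_of_int \<lceil>D * real K / e\<rceil> \<le> D * real K / e + 1" by (rule of_int_ceiling_le_add_one)
    moreover have "real (nat \<lceil>D * real K / e\<rceil>) = real_of_int \<lceil>D * real K / e\<rceil>" using cpos by simp
    moreover have "real m = real (nat \<lceil>D * real K / e\<rceil>) + 1" unfolding m_def by simp
    ultimately have "real m \<le> D * real K / e + 2" by linarith
    then have "real (m+1) \<le> D / e * real K + 3" by simp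
    also have "\<dots> \<le> D / e * real K + 3 * real K" using K1 by simp
    finally show ?thesis unfolding c_def by (simp add: algebra_simps)
  qed
  define a where "a = max 1 (ln c)"
  have a1: "1 \<le> a" unfolding a_def by simp
  have lnK: "0 \<le> ln (real K)" using K1 by simp
  have rhs0: "0 \<le> (1 + \<theta>) * ln (real K) + ln (a / \<theta>)"
    using lnK t a1 by (simp add: pos_le_divide_eq)
  show ?thesis
  proof (cases "NM n (2*e) \<le> 1")
    case True
    then have "lg (real (NM n (2*e))) = 0" unfolding lg_def by (cases "NM n (2*e)") auto
    then show ?thesis using rhs0 unfolding lg_def a_def c_def K_def by simp
  next
    case False
    let ?N = "real (NM n (2*e))"
    have N2: "2 \<le> ?N" using False by simp
    have "?N \<le> real ((m+1)^K)" using NE by (simp only: of_nat_le_iff)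
    also have "\<dots> = real (m+1) ^ K" by simp
    also have "\<dots> \<le> (c * real K) ^ K" by (rule power_mono[OF m1]) simp
    finally have Nb: "?N \<le> (c * real K) ^ K" .
    have cK: "0 < c * real K" using c3 K1 by simp
    have lnN: "ln ?N \<le> real K * (ln c + ln (real K))"
    proof -
      have "ln ?N \<le> ln ((c * real K) ^ K)" using Nb N2 by simp
      also have "\<dots> = real K * ln (c * real K)" using cK by (simp add: ln_realpow)
      also have "ln (c * real K) = ln c + ln (real K)" using c3 K1 by (simp add: ln_mult)
      finally show ?thesis .
    qed
    have lnNp: "0 < ln ?N" using N2 by simp
    have lnc: "0 < ln c" using c3 by simp
    have "lg (lg ?N) = ln (ln ?N)" using N2 lnNp by (simp add: lg_pos)
    also have "\<dots> \<le> ln (real K * (ln c + ln (real K)))" using lnN lnNp by simp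
    also have "\<dots> = ln (real K) + ln (ln c + ln (real K))"
    proof -
      have "0 < real K" using K1 by simp
      moreover have "0 < ln c + ln (real K)" using lnc lnK by linarith
      ultimately show ?thesis by (simp add: ln_mult)
    qed
    also have "ln (ln c + ln (real K)) \<le> ln (a + ln (real K))" using lnc lnK a1 unfolding a_def by simp
    also have "ln (a + ln (real K)) \<le> ln (a / \<theta>) + \<theta> * ln (real K)" by (rule ln_bound[OF a1 t lnK])
    finally show ?thesis unfolding a_def c_def K_def by (simp add: algebra_simps)
  qed
qed

end

lemma limsup_c_over_n: "limsup (\<lambda>n. ereal (c / real n)) = 0"
proof -
  have "(\<lambda>n. c / real n) \<longlonglongrightarrow> 0" by (rule lim_const_over_n)
  then have "(\<lambda>n. ereal (c / real n)) \<longlonglongrightarrow> ereal 0" by (rule tendsto_ereal)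
  then show ?thesis using lim_imp_Limsup[OF trivial_limit_sequentially] zero_ereal_def by metis
qed

lemma ereal_eps_le:
  fixes M T :: ereal
  assumes T0: "0 \<le> T" and h: "\<And>\<theta>. 0 < \<theta> \<Longrightarrow> \<theta> \<le> 1 \<Longrightarrow> M \<le> ereal (1 + \<theta>) * T"
  shows "M \<le> T"
proof (cases T)
  case PInf then show ?thesis by simp
next
  case MInf then show ?thesis using T0 by simp
next
  case (real t)
  have t0: "0 \<le> t" using T0 real by simp
  have M2: "M \<le> ereal (2 * t)" using h[of 1] real by simp
  show ?thesis
  proof (rule ccontr)
    assume "\<not> M \<le> T"
    then have lt: "ereal t < M" using real by simp
    then obtain m' where m': "M = ereal m'" using M2 by (cases M) auto
    have tm: "t < m'" using lt m' by simp
    define \<theta> where "\<theta> = min 1 ((m' - t) / (2 * (t + 1)))"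
    have tp: "0 < \<theta>" "\<theta> \<le> 1" unfolding \<theta>_def using tm t0 by auto
    have tb: "\<theta> * (t + 1) \<le> (m' - t) / 2"
    proof -
      have "\<theta> \<le> (m' - t) / (2 * (t + 1))" unfolding \<theta>_def by simp
      then have "\<theta> * (t + 1) \<le> (m' - t) / (2 * (t + 1)) * (t + 1)" using t0 by (intro mult_right_mono) auto
      also have "\<dots> = (m' - t) / 2" using t0 by (simp add: field_simps)
      finally show ?thesis .
    qed
    have "m' \<le> (1 + \<theta>) * t" using h[OF tp] m' real by simp
    also have "\<dots> \<le> t + \<theta> * (t + 1)" using tp t0 by (simp add: algebra_simps)
    finally have "m' \<le> t + \<theta> * (t + 1)" .
    then have "m' \<le> t + (m' - t) / 2" using tb by (rule order_trans[OF _ add_left_mono])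
    then have "2 * m' \<le> 2 * t + (m' - t)" by (simp add: field_simps)
    then show False using tm by simp
  qed
qed

context dyn begin

definition "T e = limsup (\<lambda>n. ereal (lg (real (SN n e)) / real n))"
definition "M e = limsup (\<lambda>n. ereal (lg (lg (real (NM n e))) / real n))"

lemma lgSN: "0 < n \<Longrightarrow> 0 < e \<Longrightarrow> lg (real (SN n e)) = ln (real (SN n e))"
  using spanning_number_pos[of n e] by (simp add: lg_pos)

lemma T_nonneg: "0 < e \<Longrightarrow> 0 \<le> T e"
proof -
  assume e: "0 < e"
  have "limsup (\<lambda>n. (0::ereal)) \<le> T e" unfolding T_def
  proof (rule Limsup_mono)
    show "\<forall>\<^sub>F n in sequentially. 0 \<le> ereal (lg (real (SN n e)) / real n)"
      unfolding eventually_sequentially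
    proof (intro exI[of _ 1] allI impI)
      fix n :: nat assume "1 \<le> n"
      then have "0 \<le> ln (real (SN n e))" using spanning_number_pos[of n e] e by simp
      then show "0 \<le> ereal (lg (real (SN n e)) / real n)" using lgSN[of n e] e \<open>1 \<le> n\<close> by simp
    qed
  qed
  then show ?thesis by (simp add: Limsup_const)
qed

lemma T_anti: "0 < e \<Longrightarrow> e \<le> e' \<Longrightarrow> T e' \<le> T e"
  unfolding T_def
proof (rule Limsup_mono)
  assume e: "0 < e" "e \<le> e'"
  show "\<forall>\<^sub>F n in sequentially. ereal (lg (real (SN n e')) / real n) \<le> ereal (lg (real (SN n e)) / real n)"
    unfolding eventually_sequentially
  proof (intro exI[of _ 1] allI impI)
    fix n :: nat assume n: "1 \<le> n"
    have "SN n e' \<le> SN n e" using spanning_number_anti[of n e e'] e n by simp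
    moreover have "1 \<le> SN n e'" using spanning_number_pos[of n e'] e n by simp
    ultimately have "ln (real (SN n e')) \<le> ln (real (SN n e))" by simp
    then show "ereal (lg (real (SN n e')) / real n) \<le> ereal (lg (real (SN n e)) / real n)"
      using lgSN[of n e] lgSN[of n e'] e n by (simp add: divide_right_mono)
  qed
qed

lemma T_le_M: "0 < r \<Longrightarrow> T (4*r) \<le> M (r/16)"
proof -
  assume r: "0 < r"
  have "T (4*r) \<le> limsup (\<lambda>n. ereal (lg (lg (real (NM n (r/16)))) / real n) + ereal (3 / real n))"
    unfolding T_def
  proof (rule Limsup_mono)
    show "\<forall>\<^sub>F n in sequentially. ereal (lg (real (SN n (4*r))) / real n) \<le> ereal (lg (lg (real (NM n (r/16)))) / real n) + ereal (3 / real n)"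
      unfolding eventually_sequentially
    proof (intro exI[of _ 1] allI impI)
      fix n :: nat assume n: "1 \<le> n"
      have "ln (real (SN n (4*r))) \<le> lg (lg (real (NM n (r/16)))) + 3" using lower_pt[of n r] n r by simp
      then have "ln (real (SN n (4*r))) / real n \<le> (lg (lg (real (NM n (r/16)))) + 3) / real n"
        by (rule divide_right_mono) simp
      then show "ereal (lg (real (SN n (4*r))) / real n) \<le> ereal (lg (lg (real (NM n (r/16)))) / real n) + ereal (3 / real n)"
        using lgSN[of n "4*r"] n r by (simp add: add_divide_distrib)
    qed
  qed
  also have "\<dots> \<le> M (r/16) + limsup (\<lambda>n. ereal (3 / real n))" unfolding M_def by (rule ereal_limsup_add_mono)
  also have "\<dots> = M (r/16)" by (simp add: limsup_c_over_n)
  finally show ?thesis .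
qed

lemma M_le_T: "0 < e \<Longrightarrow> M (2*e) \<le> T e"
proof -
  assume e: "0 < e"
  show ?thesis
  proof (rule ereal_eps_le[OF T_nonneg[OF e]])
    fix \<theta> :: real assume t: "0 < \<theta>" "\<theta> \<le> 1"
    define C where "C = ln (max 1 (ln (D/e + 3)) / \<theta>)"
    have "M (2*e) \<le> limsup (\<lambda>n. ereal (1 + \<theta>) * ereal (lg (real (SN n e)) / real n) + ereal (C / real n))"
      unfolding M_def
    proof (rule Limsup_mono)
      show "\<forall>\<^sub>F n in sequentially. ereal (lg (lg (real (NM n (2*e)))) / real n) \<le> ereal (1 + \<theta>) * ereal (lg (real (SN n e)) / real n) + ereal (C / real n)"
        unfolding eventually_sequentially
      proof (intro exI[of _ 1] allI impI)
        fix n :: nat assume n: "1 \<le> n"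
        have "lg (lg (real (NM n (2*e)))) \<le> (1 + \<theta>) * ln (real (SN n e)) + C"
          using upper_pt[of n e \<theta>] n e t unfolding C_def by simp
        then have "lg (lg (real (NM n (2*e)))) / real n \<le> ((1 + \<theta>) * ln (real (SN n e)) + C) / real n"
          by (rule divide_right_mono) simp
        then show "ereal (lg (lg (real (NM n (2*e)))) / real n) \<le> ereal (1 + \<theta>) * ereal (lg (real (SN n e)) / real n) + ereal (C / real n)"
          using lgSN[of n e] n e by (simp add: add_divide_distrib)
      qed
    qed
    also have "\<dots> \<le> limsup (\<lambda>n. ereal (1 + \<theta>) * ereal (lg (real (SN n e)) / real n)) + limsup (\<lambda>n. ereal (C / real n))"
      by (rule ereal_limsup_add_mono)
    also have "limsup (\<lambda>n. ereal (1 + \<theta>) * ereal (lg (real (SN n e)) / real n)) = ereal (1 + \<theta>) * T e"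
      unfolding T_def by (rule Limsup_ereal_mult_left[OF trivial_limit_sequentially]) (use t in simp)
    also have "limsup (\<lambda>n. ereal (C / real n)) = 0" by (rule limsup_c_over_n)
    also have "ereal (1 + \<theta>) * T e + 0 = ereal (1 + \<theta>) * T e" by simp
    finally show "M (2*e) \<le> ereal (1 + \<theta>) * T e" .
  qed
qed

definition "h = (SUP e\<in>{0<..}. T e)"

lemma T_le_h: "0 < e \<Longrightarrow> T e \<le> h" unfolding h_def by (rule SUP_upper) simp

lemma T_tendsto: "(T \<longlongrightarrow> h) (at_right 0)"
proof (rule order_tendstoI)
  fix a assume "a < h"
  then obtain e0 where e0: "0 < e0" "a < T e0" unfolding h_def by (auto simp: less_SUP_iff)
  show "\<forall>\<^sub>F x in at_right 0. a < T x"
    unfolding eventually_at_right_field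
    by (rule exI[of _ e0]) (use e0 T_anti in \<open>force intro: order_less_le_trans\<close>)
next
  fix a assume "h < a"
  show "\<forall>\<^sub>F x in at_right 0. T x < a"
    unfolding eventually_at_right_field
    by (rule exI[of _ 1]) (use \<open>h < a\<close> T_le_h in \<open>force intro: order_le_less_trans\<close>)
qed

lemma M_tendsto: "(M \<longlongrightarrow> h) (at_right 0)"
proof (rule order_tendstoI)
  fix a assume "a < h"
  then obtain e0 where e0: "0 < e0" "a < T e0" unfolding h_def by (auto simp: less_SUP_iff)
  have "a < M y" if y: "0 < y" "y < e0 / 64" for y
  proof -
    have "T e0 \<le> T (4 * (16 * y))" using T_anti[of "4 * (16 * y)" e0] y by simp
    also have "\<dots> \<le> M ((16 * y) / 16)" by (rule T_le_M) (use y in simp)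
    finally show ?thesis using e0 by simp
  qed
  then show "\<forall>\<^sub>F x in at_right 0. a < M x"
    unfolding eventually_at_right_field
    by (intro exI[of _ "e0/64"]) (use e0 in auto)
next
  fix a assume ha: "h < a"
  have "M y < a" if y: "0 < y" for y
  proof -
    have "M y = M (2 * (y/2))" by simp
    also have "\<dots> \<le> T (y/2)" by (rule M_le_T) (use y in simp)
    also have "\<dots> \<le> h" by (rule T_le_h) (use y in simp)
    finally show ?thesis using ha by simp
  qed
  then show "\<forall>\<^sub>F x in at_right 0. M x < a"
    unfolding eventually_at_right_field by (intro exI[of _ 1]) auto
qed

lemma main: "entropy_order f prob_measures = top_entropy f"
proof -
  have "entropy_order f prob_measures = Lim (at_right 0) M"
    unfolding entropy_order_def M_def by simp
  also have "\<dots> = h" by (rule tendsto_Lim[OF trivial_limit_at_right_real M_tendsto])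
  also have "\<dots> = Lim (at_right 0) T" by (rule tendsto_Lim[OF trivial_limit_at_right_real T_tendsto, symmetric])
  also have "\<dots> = top_entropy f" unfolding top_entropy_def T_def by simp
  finally show ?thesis .
qed

end

theorem theorem1p2:
  fixes f :: "'a::metric_space \<Rightarrow> 'a"
  assumes "compact (UNIV :: 'a set)"
    and "continuous_on UNIV f"
  shows "entropy_order f prob_measures = top_entropy f"
proof -
  interpret dyn f using assms by unfold_locales
  show ?thesis by (rule main)
qed


end
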